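(* Let $G$ be a locally compact, unimodular, metrizable group, let $d$ be a left-invariant proper metric on $G$ inducing its topology, and let $\Gamma<G$ be a discrete cocompact subgroup. Let $F$ be a finitely generated free group with a symmetric free generating set $S$, and let $\phi:F\to G$ be a homomorphism. Then for every $\epsilon>0$ there exists an $\epsilon$-perturbation $\phi_\epsilon:F\to G$ of $\phi$ that is virtually a homomorphism into $\Gamma$.
   Context: A symmetric free generating set of a free group $F$ is a set $S=B\cup B^{-1}$ where $B$ is a free basis of $F$. Given a group $F$ with finite symmetric generating set $S$, a homomorphism $\phi:F\to G$ and $\epsilon>0$, a map $\phi_\epsilon:F\to G$ (not necessarily a homomorphism, and not required to send the identity to the identity) is an $\epsilon$-perturbation of $\phi$ if $d(\phi_\epsilon(fs),\phi_\epsilon(f)\phi(s))\le\epsilon$ for all $f\in F$, $s\in S$. A map $\phi_\epsilon:F\to G$ is virtually a homomorphism into $\Gamma$ if there is a finite-index subgroup $F'<F$ such that $\phi_\epsilon(f_1f_2)=\phi_\epsilon(f_1)\phi_\epsilon(f_2)$ for all $f_1\in F'$, $f_2\in F$, and moreover $\phi_\epsilon(F')\subset\Gamma$. *)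

theory Defs
  imports "HOL-Analysis.Analysis"
begin

(* Groups are written additively via the (not necessarily commutative) class group_add. *)

definition is_subgroup :: "'a::group_add set \<Rightarrow> bool" where
  "is_subgroup H \<longleftrightarrow> 0 \<in> H \<and> (\<forall>x\<in>H. \<forall>y\<in>H. x + y \<in> H) \<and> (\<forall>x\<in>H. - x \<in> H)"

definition finite_index :: "'a::group_add set \<Rightarrow> bool" where
  "finite_index H \<longleftrightarrow> finite {(\<lambda>x. g + x) ` H | g. True}"

definition is_hom :: "('a::group_add \<Rightarrow> 'b::group_add) \<Rightarrow> bool" where
  "is_hom f \<longleftrightarrow> (\<forall>x y. f (x + y) = f x + f y)"

definition letter_val :: "'a::group_add \<times> bool \<Rightarrow> 'a" where
  "letter_val l = (if snd l then fst l else - fst l)"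

definition word_val :: "('a::group_add \<times> bool) list \<Rightarrow> 'a" where
  "word_val w = foldr (\<lambda>l acc. letter_val l + acc) w 0"

definition reduced_word :: "('a \<times> bool) list \<Rightarrow> bool" where
  "reduced_word w \<longleftrightarrow> (\<forall>i. Suc i < length w \<longrightarrow>
      \<not> (fst (w ! i) = fst (w ! Suc i) \<and> snd (w ! i) \<noteq> snd (w ! Suc i)))"

definition free_basis :: "'a::group_add set \<Rightarrow> bool" where
  "free_basis B \<longleftrightarrow>
     (\<forall>g. \<exists>w. set (map fst w) \<subseteq> B \<and> word_val w = g) \<and>
     (\<forall>w. set (map fst w) \<subseteq> B \<and> reduced_word w \<and> w \<noteq> [] \<longrightarrow> word_val w \<noteq> 0)"

definition symmetric_free_generating_set :: "'a::group_add set \<Rightarrow> bool" where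
  "symmetric_free_generating_set S \<longleftrightarrow>
     (\<exists>B. finite B \<and> free_basis B \<and> S = B \<union> uminus ` B)"

(* unimodular: there is a nonzero, locally finite Borel measure that is both left and right invariant
   (i.e. a left Haar measure that is also right invariant) *)
definition unimodular :: "'a::{group_add, topological_space} itself \<Rightarrow> bool" where
  "unimodular _ \<longleftrightarrow> (\<exists>M :: 'a measure.
      sets M = sets borel \<and> emeasure M UNIV \<noteq> 0 \<and>
      (\<forall>K. compact K \<longrightarrow> emeasure M K < \<infinity>) \<and>
      (\<forall>g A. A \<in> sets borel \<longrightarrow>
          emeasure M ((\<lambda>x. g + x) ` A) = emeasure M A \<and>
          emeasure M ((\<lambda>x. x + g) ` A) = emeasure M A))"

definition perturbation :: "real \<Rightarrow> 'f::group_add set \<Rightarrow> ('f \<Rightarrow> 'g::{group_add,metric_space}) \<Rightarrow> ('f \<Rightarrow> 'g) \<Rightarrow> bool" where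
  "perturbation \<epsilon> S \<phi> \<psi> \<longleftrightarrow> (\<forall>f. \<forall>s\<in>S. dist (\<psi> (f + s)) (\<psi> f + \<phi> s) \<le> \<epsilon>)"

definition virtually_hom_into :: "('f::group_add \<Rightarrow> 'g::group_add) \<Rightarrow> 'g set \<Rightarrow> bool" where
  "virtually_hom_into \<psi> \<Gamma> \<longleftrightarrow> (\<exists>F'. is_subgroup F' \<and> finite_index F' \<and>
      (\<forall>f1\<in>F'. \<forall>f2. \<psi> (f1 + f2) = \<psi> f1 + \<psi> f2) \<and> \<psi> ` F' \<subseteq> \<Gamma>)"

end

theory Submission
  imports Defs
begin

definition mapw :: "('a \<Rightarrow> 'b) \<Rightarrow> ('a \<times> bool) list \<Rightarrow> ('b \<times> bool) list" where
  "mapw h w = map (\<lambda>l. (h (fst l), snd l)) w"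

lemma word_val_Nil[simp]: "word_val [] = 0" by (simp add: word_val_def)
lemma word_val_Cons[simp]: "word_val (l # w) = letter_val l + word_val w" by (simp add: word_val_def)
lemma word_val_append: "word_val (w1 @ w2) = word_val w1 + word_val w2"
  by (induction w1) (auto simp: add.assoc)

lemma mapw_simps[simp]: "mapw h [] = []" "mapw h (l # w) = (h (fst l), snd l) # mapw h w"
  "mapw h (w1 @ w2) = mapw h w1 @ mapw h w2"
  by (auto simp: mapw_def)

lemma mapw_id[simp]: "mapw (\<lambda>x. x) w = w" by (induction w) auto

definition cancels :: "'a \<times> bool \<Rightarrow> 'a \<times> bool \<Rightarrow> bool" where
  "cancels l l' \<longleftrightarrow> fst l = fst l' \<and> snd l \<noteq> snd l'"

fun red :: "('a \<times> bool) list \<Rightarrow> ('a \<times> bool) list" where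
  "red [] = []"
| "red (l # w) = (case red w of [] \<Rightarrow> [l] | l' # r \<Rightarrow> if cancels l l' then r else l # l' # r)"

lemma reduced_word_simps:
  "reduced_word []" "reduced_word [x]"
  "reduced_word (x # y # w) \<longleftrightarrow> \<not> cancels x y \<and> reduced_word (y # w)"
proof -
  show "reduced_word []" "reduced_word [x]" by (auto simp: reduced_word_def)
  show "reduced_word (x # y # w) \<longleftrightarrow> \<not> cancels x y \<and> reduced_word (y # w)"
  proof
    assume a: "reduced_word (x # y # w)"
    have "\<not> cancels x y" using a[unfolded reduced_word_def, rule_format, of 0] by (auto simp: cancels_def)
    moreover have "reduced_word (y # w)" unfolding reduced_word_def
    proof (intro allI impI)
      fix i assume "Suc i < length (y # w)"
      then show "\<not> (fst ((y # w) ! i) = fst ((y # w) ! Suc i) \<and> snd ((y # w) ! i) \<noteq> snd ((y # w) ! Suc i))"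
        using a[unfolded reduced_word_def, rule_format, of "Suc i"] by simp
    qed
    ultimately show "\<not> cancels x y \<and> reduced_word (y # w)" by blast
  next
    assume a: "\<not> cancels x y \<and> reduced_word (y # w)"
    show "reduced_word (x # y # w)" unfolding reduced_word_def
    proof (intro allI impI)
      fix i assume i: "Suc i < length (x # y # w)"
      show "\<not> (fst ((x # y # w) ! i) = fst ((x # y # w) ! Suc i) \<and> snd ((x # y # w) ! i) \<noteq> snd ((x # y # w) ! Suc i))"
      proof (cases i)
        case 0 then show ?thesis using a by (auto simp: cancels_def)
      next
        case (Suc j) then show ?thesis using a i unfolding reduced_word_def by auto
      qed
    qed
  qed
qed

lemma reduced_tail: "reduced_word (x # w) \<Longrightarrow> reduced_word w"
  by (cases w) (auto simp: reduced_word_simps)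

lemma red_reduced: "reduced_word (red w)"
proof (induction w)
  case Nil then show ?case by (simp add: reduced_word_simps)
next
  case (Cons l w)
  show ?case
  proof (cases "red w")
    case Nil then show ?thesis by (simp add: reduced_word_simps)
  next
    case (Cons l' r)
    then show ?thesis using Cons.IH by (auto simp: reduced_word_simps intro: reduced_tail)
  qed
qed

lemma red_set: "set (red w) \<subseteq> set w"
proof (induction w)
  case Nil then show ?case by simp
next
  case (Cons l w)
  then show ?case by (cases "red w") auto
qed

lemma letter_cancel: "cancels l l' \<Longrightarrow> letter_val (h (fst l), snd l) + letter_val (h (fst l'), snd l') = (0::'b::group_add)"
  by (auto simp: cancels_def letter_val_def)

lemma red_val: "word_val (mapw h (red w)) = (word_val (mapw h w) :: 'b::group_add)"
proof (induction w)
  case Nil then show ?case by simp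
next
  case (Cons l w)
  show ?case
  proof (cases "red w")
    case Nil then show ?thesis using Cons.IH by simp
  next
    case (Cons l' r)
    show ?thesis
    proof (cases "cancels l l'")
      case True
      have "word_val (mapw h (l # w)) = letter_val (h (fst l), snd l) + (letter_val (h (fst l'), snd l') + word_val (mapw h r))"
        using Cons.IH Cons by simp
      also have "\<dots> = word_val (mapw h r)" using letter_cancel[OF True, of h]
        by (simp add: add.assoc[symmetric])
      finally show ?thesis using Cons True by simp
    next
      case False then show ?thesis using Cons Cons.IH by simp
    qed
  qed
qed

definition invw :: "('a \<times> bool) list \<Rightarrow> ('a \<times> bool) list" where
  "invw w = rev (map (\<lambda>l. (fst l, \<not> snd l)) w)"

lemma invw_val: "word_val (mapw h (invw w)) = - (word_val (mapw h w) :: 'b::group_add)"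
proof (induction w)
  case Nil then show ?case by (simp add: invw_def)
next
  case (Cons l w)
  have "invw (l # w) = invw w @ [(fst l, \<not> snd l)]" by (simp add: invw_def)
  then show ?case using Cons by (simp add: word_val_append letter_val_def minus_add)
qed

lemma invw_set: "set (map fst (invw w)) = set (map fst w)"
  by (auto simp: invw_def image_image)

lemma word_val_welldef:
  fixes w1 w2 :: "('a::group_add \<times> bool) list"
  assumes fb: "free_basis B" and s1: "set (map fst w1) \<subseteq> B" and s2: "set (map fst w2) \<subseteq> B"
    and eq: "word_val w1 = word_val w2"
  shows "word_val (mapw h w1) = (word_val (mapw h w2) :: 'b::group_add)"
proof -
  define w where "w = w1 @ invw w2"
  have "word_val w = 0" using eq invw_val[of "\<lambda>x. x" w2] by (simp add: w_def word_val_append)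
  hence v0: "word_val (red w) = 0" using red_val[of "\<lambda>x. x" w] by simp
  have "set (map fst (red w)) \<subseteq> set (map fst w)" using red_set[of w] by auto
  moreover have "set (map fst w) \<subseteq> B" using s1 s2 invw_set[of w2] unfolding w_def by simp
  ultimately have "set (map fst (red w)) \<subseteq> B" by (rule subset_trans)
  hence "red w = []" using fb v0 red_reduced[of w] unfolding free_basis_def by blast
  hence "word_val (mapw h w) = 0" using red_val[of h w] by simp
  hence "word_val (mapw h w1) + - word_val (mapw h w2) = 0"
    by (simp add: w_def word_val_append invw_val)
  then show ?thesis by (simp add: add_eq_0_iff2 minus_equation_iff)
qed

definition ext :: "'a set \<Rightarrow> ('a::group_add \<Rightarrow> 'b::group_add) \<Rightarrow> 'a \<Rightarrow> 'b" where
  "ext B h g = word_val (mapw h (SOME w. set (map fst w) \<subseteq> B \<and> word_val w = g))"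

lemma ext_props:
  fixes B :: "'a::group_add set" and h :: "'a \<Rightarrow> 'b::group_add"
  assumes fb: "free_basis B"
  shows "\<And>x y. ext B h (x + y) = ext B h x + ext B h y"
    and "\<And>b. b \<in> B \<Longrightarrow> ext B h b = h b"
proof -
  have ex: "\<And>g. \<exists>w. set (map fst w) \<subseteq> B \<and> word_val w = g" using fb unfolding free_basis_def by blast
  define W where "W g = (SOME w. set (map fst w) \<subseteq> B \<and> word_val w = g)" for g
  have W: "set (map fst (W g)) \<subseteq> B \<and> word_val (W g) = g" for g
    unfolding W_def by (rule someI_ex[OF ex])
  have E: "ext B h g = word_val (mapw h (W g))" for g by (simp add: ext_def W_def)
  fix x y
  have "ext B h (x + y) = word_val (mapw h (W x @ W y))"
    unfolding E by (rule word_val_welldef[OF fb]) (use W in \<open>auto simp: word_val_append\<close>)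
  then show "ext B h (x + y) = ext B h x + ext B h y" by (simp add: E word_val_append)
next
  fix b assume b: "b \<in> B"
  have ex: "\<And>g. \<exists>w. set (map fst w) \<subseteq> B \<and> word_val w = g" using fb unfolding free_basis_def by blast
  define W where "W g = (SOME w. set (map fst w) \<subseteq> B \<and> word_val w = g)" for g
  have W: "set (map fst (W g)) \<subseteq> B \<and> word_val (W g) = g" for g
    unfolding W_def by (rule someI_ex[OF ex])
  have "ext B h b = word_val (mapw h [(b, True)])"
    unfolding ext_def W_def[symmetric] by (rule word_val_welldef[OF fb]) (use W b in \<open>auto simp: letter_val_def\<close>)
  then show "ext B h b = h b" by (simp add: letter_val_def)
qed

typedef 'a bijf = "{f :: 'a \<Rightarrow> 'a. bij f}" by (rule exI[of _ id]) simp

setup_lifting type_definition_bijf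

instantiation bijf :: (type) group_add
begin
definition "0 = Abs_bijf id"
definition "f + g = Abs_bijf (Rep_bijf g \<circ> Rep_bijf f)"
definition "- f = Abs_bijf (inv (Rep_bijf f))"
definition "f - g = Abs_bijf (inv (Rep_bijf g) \<circ> Rep_bijf f)"
lemma rep_bij: "bij (Rep_bijf f)" using Rep_bijf[of f] by simp
lemma Rep_zero: "Rep_bijf 0 = id" by (simp add: zero_bijf_def Abs_bijf_inverse)
lemma Rep_plus: "Rep_bijf (f + g) = Rep_bijf g \<circ> Rep_bijf f"
  by (simp add: plus_bijf_def Abs_bijf_inverse bij_comp rep_bij)
lemma Rep_uminus: "Rep_bijf (- f) = inv (Rep_bijf f)"
  by (simp add: uminus_bijf_def Abs_bijf_inverse bij_imp_bij_inv rep_bij)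
instance
proof
  fix a b c :: "'a bijf"
  show "a + b + c = a + (b + c)" by (simp add: Rep_bijf_inject[symmetric] Rep_plus comp_assoc)
  show "0 + a = a" by (simp add: Rep_bijf_inject[symmetric] Rep_plus Rep_zero)
  show "a + 0 = a" by (simp add: Rep_bijf_inject[symmetric] Rep_plus Rep_zero)
  show "- a + a = 0" by (simp add: Rep_bijf_inject[symmetric] Rep_plus Rep_zero Rep_uminus
     bij_is_surj[OF rep_bij] surj_iff[symmetric])
  show "a + - b = a - b" by (simp add: plus_bijf_def minus_bijf_def Rep_uminus)
qed
end

lemma Rep_Abs_bijf: "bij f \<Longrightarrow> Rep_bijf (Abs_bijf f) = f" by (simp add: Abs_bijf_inverse)

definition good :: "'g::group_add set \<Rightarrow> 's set \<Rightarrow> ('g \<times> 's) bijf \<Rightarrow> bool" where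
  "good \<Gamma> Sl h \<longleftrightarrow> (\<exists>c \<pi>. (\<forall>s. c s \<in> \<Gamma>) \<and> bij \<pi> \<and> (\<forall>s. s \<in> Sl \<longleftrightarrow> \<pi> s \<in> Sl) \<and>
      Rep_bijf h = (\<lambda>(y,s). (y + c s, \<pi> s)))"

lemma good_0: assumes "is_subgroup \<Gamma>" shows "good \<Gamma> Sl 0"
proof -
  have "Rep_bijf (0::('a\<times>'b) bijf) = (\<lambda>(y,s). (y + 0, id s))" by (auto simp: fun_eq_iff Rep_zero)
  moreover have "\<forall>s. (\<lambda>_. 0) s \<in> \<Gamma>" using assms by (simp add: is_subgroup_def)
  ultimately show ?thesis unfolding good_def
    by (intro exI[of _ "\<lambda>_. 0"] exI[of _ id]) simp
qed

lemma good_plus: assumes G: "is_subgroup \<Gamma>" and "good \<Gamma> Sl f" "good \<Gamma> Sl g" shows "good \<Gamma> Sl (f + g)"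
proof -
  obtain c \<pi> where f: "\<forall>s. c s \<in> \<Gamma>" "bij \<pi>" "\<forall>s. s \<in> Sl \<longleftrightarrow> \<pi> s \<in> Sl" "Rep_bijf f = (\<lambda>(y,s). (y + c s, \<pi> s))"
    using assms(2) unfolding good_def by blast
  obtain c' \<pi>' where g: "\<forall>s. c' s \<in> \<Gamma>" "bij \<pi>'" "\<forall>s. s \<in> Sl \<longleftrightarrow> \<pi>' s \<in> Sl" "Rep_bijf g = (\<lambda>(y,s). (y + c' s, \<pi>' s))"
    using assms(3) unfolding good_def by blast
  show ?thesis unfolding good_def Rep_plus
  proof (intro exI conjI)
    show "\<forall>s. c s + c' (\<pi> s) \<in> \<Gamma>" using f(1) g(1) G by (simp add: is_subgroup_def)
    show "bij (\<pi>' \<circ> \<pi>)" using f(2) g(2) by (rule bij_comp)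
    show "\<forall>s. s \<in> Sl \<longleftrightarrow> (\<pi>' \<circ> \<pi>) s \<in> Sl"
    proof
      fix s show "s \<in> Sl \<longleftrightarrow> (\<pi>' \<circ> \<pi>) s \<in> Sl"
        using f(3)[rule_format, of s] g(3)[rule_format, of "\<pi> s"] by simp
    qed
    show "Rep_bijf g \<circ> Rep_bijf f = (\<lambda>(y, s). (y + (c s + c' (\<pi> s)), (\<pi>' \<circ> \<pi>) s))"
      unfolding f(4) g(4) by (simp add: fun_eq_iff add.assoc split: prod.splits)
  qed
qed

lemma good_uminus: assumes G: "is_subgroup \<Gamma>" and "good \<Gamma> Sl f" shows "good \<Gamma> Sl (- f)"
proof -
  obtain c \<pi> where f: "\<forall>s. c s \<in> \<Gamma>" "bij \<pi>" "\<forall>s. s \<in> Sl \<longleftrightarrow> \<pi> s \<in> Sl" "Rep_bijf f = (\<lambda>(y,s). (y + c s, \<pi> s))"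
    using assms(2) unfolding good_def by blast
  have i1: "inv \<pi> (\<pi> s) = s" for s using f(2) by (simp add: bij_is_inj)
  have i2: "\<pi> (inv \<pi> s) = s" for s using f(2) by (simp add: bij_is_surj surj_f_inv_f)
  have inv: "inv (Rep_bijf f) = (\<lambda>(y,s). (y - c (inv \<pi> s), inv \<pi> s))"
  proof (rule inv_equality)
    fix x :: "'a \<times> 'b" obtain a b where x: "x = (a,b)" by (cases x)
    show "(case Rep_bijf f x of (y, s) \<Rightarrow> (y - c (inv \<pi> s), inv \<pi> s)) = x"
      unfolding x f(4) by (simp add: i1)
  next
    fix x :: "'a \<times> 'b" obtain a b where x: "x = (a,b)" by (cases x)
    show "Rep_bijf f (case x of (y, s) \<Rightarrow> (y - c (inv \<pi> s), inv \<pi> s)) = x"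
      unfolding x f(4) by (simp add: i2)
  qed
  have b: "bij (inv \<pi>)" using f(2) by (simp add: bij_imp_bij_inv)
  have sl: "\<forall>s. s \<in> Sl \<longleftrightarrow> inv \<pi> s \<in> Sl"
  proof
    fix s show "s \<in> Sl \<longleftrightarrow> inv \<pi> s \<in> Sl" using f(3)[rule_format, of "inv \<pi> s"] unfolding i2 by (rule sym)
  qed
  have cg: "\<forall>s. - c (inv \<pi> s) \<in> \<Gamma>" using f(1) G by (simp add: is_subgroup_def)
  have r: "Rep_bijf (- f) = (\<lambda>(y,s). (y + - c (inv \<pi> s), inv \<pi> s))"
    unfolding Rep_uminus inv by simp
  show ?thesis unfolding good_def
    by (rule exI[of _ "\<lambda>s. - c (inv \<pi> s)"], rule exI[of _ "inv \<pi>"]) (intro conjI cg b sl r)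
qed

definition cof :: "('g::group_add \<times> 's) bijf \<Rightarrow> 's \<Rightarrow> 'g" where "cof h s = fst (Rep_bijf h (0, s))"
definition piof :: "('g::group_add \<times> 's) bijf \<Rightarrow> 's \<Rightarrow> 's" where "piof h s = snd (Rep_bijf h (0, s))"

lemma good_D: assumes "good \<Gamma> Sl h"
  shows "Rep_bijf h (y, s) = (y + cof h s, piof h s)" "cof h s \<in> \<Gamma>" "bij (piof h)"
    "s \<in> Sl \<longleftrightarrow> piof h s \<in> Sl"
proof -
  obtain c \<pi> where f: "\<forall>s. c s \<in> \<Gamma>" "bij \<pi>" "\<forall>s. s \<in> Sl \<longleftrightarrow> \<pi> s \<in> Sl" "Rep_bijf h = (\<lambda>(y,s). (y + c s, \<pi> s))"
    using assms unfolding good_def by blast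
  have e1: "cof h = c" unfolding cof_def[abs_def] f(4) by simp
  have e2: "piof h = \<pi>" unfolding piof_def[abs_def] f(4) by simp
  show "Rep_bijf h (y, s) = (y + cof h s, piof h s)" unfolding e1 e2 f(4) by simp
  show "cof h s \<in> \<Gamma>" unfolding e1 using f(1) by blast
  show "bij (piof h)" unfolding e2 by (rule f(2))
  show "s \<in> Sl \<longleftrightarrow> piof h s \<in> Sl" unfolding e2 using f(3) by blast
qed

lemma good_word: assumes G: "is_subgroup \<Gamma>" and "\<forall>l\<in>set w. good \<Gamma> Sl (fst l)"
  shows "good \<Gamma> Sl (word_val w)"
  using assms(2)
proof (induction w)
  case Nil then show ?case using good_0[OF G] by simp
next
  case (Cons l w)
  have "good \<Gamma> Sl (letter_val l)" using Cons.prems good_uminus[OF G] by (auto simp: letter_val_def)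
  then show ?case using Cons good_plus[OF G] by simp
qed

lemma piof_plus: "piof (f + g) = piof g \<circ> piof f" if "good \<Gamma> Sl f" "good \<Gamma> Sl g"
proof
  fix s
  have "Rep_bijf (f + g) (0, s) = Rep_bijf g (Rep_bijf f (0, s))" by (simp add: Rep_plus)
  also have "\<dots> = (0 + cof f s + cof g (piof f s), piof g (piof f s))"
    using good_D(1)[OF that(1)] good_D(1)[OF that(2)] by simp
  finally show "piof (f + g) s = (piof g \<circ> piof f) s" unfolding piof_def[of "f+g"] by simp
qed

lemma piof_uminus: "piof (- f) = inv (piof f)" if "good \<Gamma> Sl f"
proof -
  have R: "Rep_bijf f = (\<lambda>(y,s). (y + cof f s, piof f s))" using good_D(1)[OF that] by auto
  have b: "bij (piof f)" using good_D(3)[OF that] .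
  have "inv (Rep_bijf f) = (\<lambda>(y,s). (y - cof f (inv (piof f) s), inv (piof f) s))"
  proof (rule inv_equality)
    fix x :: "'a \<times> 'b" show "(case Rep_bijf f x of (y, s) \<Rightarrow> (y - cof f (inv (piof f) s), inv (piof f) s)) = x"
      unfolding R using b by (cases x) (simp add: bij_is_inj)
  next
    fix x :: "'a \<times> 'b" show "Rep_bijf f (case x of (y, s) \<Rightarrow> (y - cof f (inv (piof f) s), inv (piof f) s)) = x"
      unfolding R using b by (cases x) (simp add: bij_is_surj surj_f_inv_f)
  qed
  then show ?thesis unfolding piof_def[of "-f"] Rep_uminus by auto
qed

lemma good_Rep_uminus: assumes "good \<Gamma> Sl f"
  shows "Rep_bijf (- f) (y, s) = (y - cof f (inv (piof f) s), inv (piof f) s)"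
proof -
  have R: "Rep_bijf f = (\<lambda>(y,s). (y + cof f s, piof f s))" using good_D(1)[OF assms] by (simp add: fun_eq_iff)
  have b: "bij (piof f)" using good_D(3)[OF assms] .
  have i1: "inv (piof f) (piof f s) = s" for s using b by (simp add: bij_is_inj)
  have i2: "piof f (inv (piof f) s) = s" for s using b by (simp add: bij_is_surj surj_f_inv_f)
  have "inv (Rep_bijf f) = (\<lambda>(y,s). (y - cof f (inv (piof f) s), inv (piof f) s))"
  proof (rule inv_equality)
    fix x :: "'a \<times> 'b" obtain a b where x: "x = (a,b)" by (cases x)
    show "(case Rep_bijf f x of (y, s) \<Rightarrow> (y - cof f (inv (piof f) s), inv (piof f) s)) = x"
      unfolding x R by (simp add: i1)
  next
    fix x :: "'a \<times> 'b" obtain a b where x: "x = (a,b)" by (cases x)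
    show "Rep_bijf f (case x of (y, s) \<Rightarrow> (y - cof f (inv (piof f) s), inv (piof f) s)) = x"
      unfolding x R by (simp add: i2)
  qed
  then show ?thesis by (simp add: Rep_uminus)
qed

lemma cof_plus: "cof (f + g) s = cof f s + cof g (piof f s)" if "good \<Gamma> Sl f" "good \<Gamma> Sl g"
proof -
  have "Rep_bijf (f + g) (0, s) = Rep_bijf g (Rep_bijf f (0, s))" by (simp add: Rep_plus)
  also have "\<dots> = (0 + cof f s + cof g (piof f s), piof g (piof f s))"
    using good_D(1)[OF that(1)] good_D(1)[OF that(2)] by simp
  finally show ?thesis unfolding cof_def[of "f+g"] by simp
qed

lemma model_thm:
  fixes \<Gamma> :: "'g::{group_add, metric_space} set" and B :: "'f::group_add set" and \<phi> :: "'f \<Rightarrow> 'g"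
    and Sl :: "'s set"
  assumes G: "is_subgroup \<Gamma>" and fb: "free_basis B" and hom: "is_hom \<phi>"
    and left_inv: "\<forall>g x y::'g. dist (g + x) (g + y) = dist x y"
    and fin: "finite Sl" and s0: "s0 \<in> Sl" and g0: "gpt s0 = 0"
    and sig: "\<And>b. b \<in> B \<Longrightarrow> bij (\<sigma> b) \<and> (\<forall>s. s \<in> Sl \<longleftrightarrow> \<sigma> b s \<in> Sl)"
    and gam: "\<And>b s. \<gamma> b s \<in> \<Gamma>"
    and e1: "\<And>b s. b \<in> B \<Longrightarrow> s \<in> Sl \<Longrightarrow> dist (\<gamma> b s + gpt (\<sigma> b s)) (gpt s + \<phi> b) \<le> \<epsilon>"
    and e2: "\<And>b s. b \<in> B \<Longrightarrow> s \<in> Sl \<Longrightarrow> dist (- \<gamma> b s + gpt s) (gpt (\<sigma> b s) + - \<phi> b) \<le> \<epsilon>"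
  shows "\<exists>\<psi>. perturbation \<epsilon> (B \<union> uminus ` B) \<phi> \<psi> \<and> virtually_hom_into \<psi> \<Gamma>"
proof -
  define T where "T b = Abs_bijf (\<lambda>(y,s). (y + \<gamma> b s, \<sigma> b s))" for b
  have goodT: "good \<Gamma> Sl (T b) \<and> Rep_bijf (T b) = (\<lambda>(y,s). (y + \<gamma> b s, \<sigma> b s))" if b: "b \<in> B" for b
  proof -
    have bs: "bij (\<sigma> b)" using sig[OF b] by blast
    have i1: "inv (\<sigma> b) (\<sigma> b s) = s" for s using bs by (simp add: bij_is_inj)
    have i2: "\<sigma> b (inv (\<sigma> b) s) = s" for s using bs by (simp add: bij_is_surj surj_f_inv_f)
    have "bij (\<lambda>(y,s). (y + \<gamma> b s, \<sigma> b s))"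
    proof (rule o_bij)
      show "(\<lambda>(y,s). (y + \<gamma> b s, \<sigma> b s)) \<circ> (\<lambda>(y,s). (y - \<gamma> b (inv (\<sigma> b) s), inv (\<sigma> b) s)) = id"
        by (simp add: fun_eq_iff i2)
      show "(\<lambda>(y,s). (y - \<gamma> b (inv (\<sigma> b) s), inv (\<sigma> b) s)) \<circ> (\<lambda>(y,s). (y + \<gamma> b s, \<sigma> b s)) = id"
        by (simp add: fun_eq_iff i1)
    qed
    then have R: "Rep_bijf (T b) = (\<lambda>(y,s). (y + \<gamma> b s, \<sigma> b s))" unfolding T_def by (rule Rep_Abs_bijf)
    have "good \<Gamma> Sl (T b)" unfolding good_def R using gam sig[OF b] by blast
    then show ?thesis using R by blast
  qed
  define \<Phi> where "\<Phi> = ext B T"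
  have Phom: "\<Phi> (x + y) = \<Phi> x + \<Phi> y" for x y unfolding \<Phi>_def by (rule ext_props(1)[OF fb])
  have PB: "b \<in> B \<Longrightarrow> \<Phi> b = T b" for b unfolding \<Phi>_def by (rule ext_props(2)[OF fb])
  have "\<Phi> 0 + \<Phi> 0 = \<Phi> 0 + 0" using Phom[of 0 0] by simp
  then have P0: "\<Phi> 0 = 0" by (rule add_left_imp_eq)
  have Pminus: "\<Phi> (- x) = - \<Phi> x" for x
  proof -
    have "\<Phi> (- x) + \<Phi> x = 0" using Phom[of "-x" x] P0 by simp
    then show ?thesis by (simp add: add_eq_0_iff2)
  qed
  have Pgood: "good \<Gamma> Sl (\<Phi> f)" for f
  proof -
    have ex: "\<exists>w. set (map fst w) \<subseteq> B \<and> word_val w = f" using conjunct1[OF fb[unfolded free_basis_def]] by (rule spec)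
    define w where "w = (SOME w. set (map fst w) \<subseteq> B \<and> word_val w = f)"
    have w: "set (map fst w) \<subseteq> B" unfolding w_def using someI_ex[OF ex] by blast
    have "\<Phi> f = word_val (mapw T w)" unfolding \<Phi>_def ext_def w_def ..
    moreover have "\<forall>l\<in>set (mapw T w). good \<Gamma> Sl (fst l)" using w goodT by (auto simp: mapw_def)
    ultimately show ?thesis using good_word[OF G] by simp
  qed
  have "\<phi> (0 + 0) = \<phi> 0 + \<phi> 0" using hom unfolding is_hom_def by blast
  then have "\<phi> 0 + \<phi> 0 = \<phi> 0 + 0" by simp
  then have phi0: "\<phi> 0 = 0" by (rule add_left_imp_eq)
  have phim: "\<phi> (- x) = - \<phi> x" for x
  proof -
    have "\<phi> (- x + x) = \<phi> (- x) + \<phi> x" using hom unfolding is_hom_def by blast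
    then have "\<phi> (- x) + \<phi> x = 0" using phi0 by simp
    then show ?thesis by (simp add: add_eq_0_iff2)
  qed
  define \<psi> where "\<psi> f = cof (\<Phi> f) s0 + gpt (piof (\<Phi> f) s0)" for f
  have inSl: "piof (\<Phi> f) s0 \<in> Sl" for f using good_D(4)[OF Pgood] s0 by blast
  have cofT: "cof (T b) s = \<gamma> b s" "piof (T b) s = \<sigma> b s" if "b \<in> B" for b s
    using goodT[OF that] by (auto simp: cof_def piof_def)
  have pert: "perturbation \<epsilon> (B \<union> uminus ` B) \<phi> \<psi>"
    unfolding perturbation_def
  proof (intro allI ballI)
    fix f s assume s: "s \<in> B \<union> uminus ` B"
    define x u where "x = cof (\<Phi> f) s0" and "u = piof (\<Phi> f) s0"
    have u: "u \<in> Sl" unfolding u_def by (rule inSl)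
    have dl: "dist (x + p) (x + q) = dist p q" for p q using left_inv by blast
    show "dist (\<psi> (f + s)) (\<psi> f + \<phi> s) \<le> \<epsilon>"
    proof (cases "s \<in> B")
      case True
      have "\<psi> (f + s) = x + (\<gamma> s u + gpt (\<sigma> s u))"
        unfolding \<psi>_def Phom PB[OF True] x_def u_def
        using cof_plus[OF Pgood goodT[OF True, THEN conjunct1]] piof_plus[OF Pgood goodT[OF True, THEN conjunct1]]
        by (simp add: cofT[OF True] add.assoc)
      moreover have "\<psi> f + \<phi> s = x + (gpt u + \<phi> s)" unfolding \<psi>_def x_def u_def by (simp add: add.assoc)
      ultimately show ?thesis using dl e1[OF True u] by simp
    next
      case False
      then obtain b where b: "b \<in> B" and sb: "s = - b" using s by blast
      have gT: "good \<Gamma> Sl (T b)" using goodT[OF b] by blast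
      have bs: "bij (\<sigma> b)" using sig[OF b] by blast
      define v where "v = inv (\<sigma> b) u"
      have sv: "\<sigma> b v = u" unfolding v_def using bs by (simp add: bij_is_surj surj_f_inv_f)
      have v: "v \<in> Sl" using sig[OF b] u sv by blast
      have "piof (T b) = \<sigma> b" using cofT(2)[OF b] by (simp add: fun_eq_iff)
      then have ipT: "inv (piof (T b)) = inv (\<sigma> b)" by simp
      have Rm: "Rep_bijf (\<Phi> f + - T b) (0, s0) = Rep_bijf (- T b) (Rep_bijf (\<Phi> f) (0,s0))"
        by (simp only: Rep_plus comp_apply)
      also have "\<dots> = (x - \<gamma> b v, v)"
        using good_D(1)[OF Pgood[of f], where y=0 and s=s0] good_Rep_uminus[OF gT]
        by (simp add: x_def u_def v_def ipT cofT[OF b])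
      finally have Rm': "Rep_bijf (\<Phi> f + - T b) (0, s0) = (x - \<gamma> b v, v)" .
      have "\<psi> (f + s) = x + (- \<gamma> b v + gpt v)"
        unfolding \<psi>_def sb Phom Pminus PB[OF b] cof_def piof_def Rm'
        by (simp add: add.assoc diff_conv_add_uminus del: add_uminus_conv_diff)
      moreover have "\<psi> f + \<phi> s = x + (gpt (\<sigma> b v) + - \<phi> b)"
        unfolding \<psi>_def x_def u_def sb phim sv by (simp add: add_diff_eq)
      ultimately show ?thesis using dl e2[OF b v] by simp
    qed
  qed
  define F' where "F' = {f. piof (\<Phi> f) s0 = s0}"
  have pp: "piof (\<Phi> (x + y)) = piof (\<Phi> y) \<circ> piof (\<Phi> x)" for x y
    unfolding Phom by (rule piof_plus[OF Pgood Pgood])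
  have pm: "piof (\<Phi> (- x)) = inv (piof (\<Phi> x))" for x
    unfolding Pminus by (rule piof_uminus[OF Pgood])
  have bP: "bij (piof (\<Phi> x))" for x by (rule good_D(3)[OF Pgood])
  have sub: "is_subgroup F'"
    unfolding is_subgroup_def F'_def
  proof (intro conjI ballI)
    show "0 \<in> {f. piof (\<Phi> f) s0 = s0}" by (simp add: P0 piof_def Rep_zero)
    fix x y assume x: "x \<in> {f. piof (\<Phi> f) s0 = s0}" and y: "y \<in> {f. piof (\<Phi> f) s0 = s0}"
    then show "x + y \<in> {f. piof (\<Phi> f) s0 = s0}" by (simp add: pp)
  next
    fix x assume x: "x \<in> {f. piof (\<Phi> f) s0 = s0}"
    then show "- x \<in> {f. piof (\<Phi> f) s0 = s0}" using bP[of x]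
      by (simp add: pm inv_f_eq bij_is_inj)
  qed
  have coset: "(\<lambda>x. g + x) ` F' = {h. inv (piof (\<Phi> h)) s0 = inv (piof (\<Phi> g)) s0}" for g
  proof (intro set_eqI iffI)
    fix h assume "h \<in> (\<lambda>x. g + x) ` F'"
    then obtain x where x: "piof (\<Phi> x) s0 = s0" and h: "h = g + x" unfolding F'_def by blast
    have "piof (\<Phi> h) (inv (piof (\<Phi> g)) s0) = piof (\<Phi> x) (piof (\<Phi> g) (inv (piof (\<Phi> g)) s0))"
      unfolding h pp by simp
    also have "\<dots> = s0" using bP[of g] x by (simp add: bij_is_surj surj_f_inv_f)
    finally have "piof (\<Phi> h) (inv (piof (\<Phi> g)) s0) = s0" .
    then have "inv (piof (\<Phi> g)) s0 = inv (piof (\<Phi> h)) s0" using bij_inv_eq_iff[OF bP[of h]] by blast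
    then show "h \<in> {h. inv (piof (\<Phi> h)) s0 = inv (piof (\<Phi> g)) s0}" by simp
  next
    fix h assume "h \<in> {h. inv (piof (\<Phi> h)) s0 = inv (piof (\<Phi> g)) s0}"
    then have e: "inv (piof (\<Phi> g)) s0 = inv (piof (\<Phi> h)) s0" by simp
    have "piof (\<Phi> (- g + h)) s0 = piof (\<Phi> h) (inv (piof (\<Phi> g)) s0)" by (simp add: pp pm)
    also have "\<dots> = s0" unfolding e using bP[of h] by (simp add: bij_is_surj surj_f_inv_f)
    finally have "- g + h \<in> F'" by (simp add: F'_def)
    moreover have "h = g + (- g + h)" by (simp add: add.assoc[symmetric])
    ultimately show "h \<in> (\<lambda>x. g + x) ` F'" by blast
  qed
  have fi: "finite_index F'"
    unfolding finite_index_def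
  proof (rule finite_subset)
    show "{(\<lambda>x. g + x) ` F' |g. True} \<subseteq> (\<lambda>u. {h. inv (piof (\<Phi> h)) s0 = u}) ` Sl"
    proof
      fix C assume "C \<in> {(\<lambda>x. g + x) ` F' |g. True}"
      then obtain g where C: "C = (\<lambda>x. g + x) ` F'" by blast
      have "inv (piof (\<Phi> g)) s0 \<in> Sl" using inSl[of "-g"] by (simp add: pm)
      then show "C \<in> (\<lambda>u. {h. inv (piof (\<Phi> h)) s0 = u}) ` Sl" unfolding C coset by blast
    qed
    show "finite ((\<lambda>u. {h. inv (piof (\<Phi> h)) s0 = u}) ` Sl)" using fin by simp
  qed
  have vh: "virtually_hom_into \<psi> \<Gamma>"
    unfolding virtually_hom_into_def
  proof (intro exI conjI ballI allI)
    show "is_subgroup F'" by (rule sub)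
    show "finite_index F'" by (rule fi)
    fix f1 f2 assume f1: "f1 \<in> F'"
    then have p1: "piof (\<Phi> f1) s0 = s0" by (simp add: F'_def)
    show "\<psi> (f1 + f2) = \<psi> f1 + \<psi> f2"
      unfolding \<psi>_def Phom cof_plus[OF Pgood Pgood] piof_plus[OF Pgood Pgood]
      by (simp add: p1 g0 add.assoc)
  next
    show "\<psi> ` F' \<subseteq> \<Gamma>"
    proof
      fix y assume "y \<in> \<psi> ` F'"
      then obtain f where "f \<in> F'" "y = \<psi> f" by blast
      then show "y \<in> \<Gamma>" using good_D(2)[OF Pgood] by (simp add: F'_def \<psi>_def g0)
    qed
  qed
  show ?thesis using pert vh by blast
qed

lemma rat_approx:
  fixes E :: "('i \<Rightarrow> real) list" and x :: "'i \<Rightarrow> real"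
  assumes "finite I" "\<forall>e\<in>set E. \<forall>i\<in>I. e i \<in> \<rat>" "\<forall>e\<in>set E. (\<Sum>i\<in>I. e i * x i) = 0" "\<delta> > 0"
  shows "\<exists>y. (\<forall>i\<in>I. y i \<in> \<rat>) \<and> (\<forall>e\<in>set E. (\<Sum>i\<in>I. e i * y i) = 0) \<and> (\<forall>i\<in>I. \<bar>y i - x i\<bar> < \<delta>)"
  using assms
proof (induction "length E" arbitrary: E I \<delta> rule: less_induct)
  case less
  show ?case
  proof (cases E)
    case Nil
    have "\<exists>r\<in>\<rat>. x i - \<delta> < r \<and> r < x i + \<delta>" for i
      using Rats_dense_in_real[of "x i - \<delta>" "x i + \<delta>"] less.prems(4) by auto
    then obtain y where "\<forall>i. y i \<in> \<rat> \<and> x i - \<delta> < y i \<and> y i < x i + \<delta>" by metis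
    then have "(\<forall>i\<in>I. y i \<in> \<rat>) \<and> (\<forall>i\<in>I. \<bar>y i - x i\<bar> < \<delta>)"
      by (simp add: abs_less_iff) (metis add.commute diff_less_eq less_diff_eq)
    then show ?thesis using Nil by auto
  next
    case (Cons e E')
    show ?thesis
    proof (cases "\<forall>i\<in>I. e i = 0")
      case True
      obtain y where y: "\<forall>i\<in>I. y i \<in> \<rat>" "\<forall>f\<in>set E'. (\<Sum>i\<in>I. f i * y i) = 0" "\<forall>i\<in>I. \<bar>y i - x i\<bar> < \<delta>"
        using less.hyps[of E' I \<delta>] less.prems Cons by auto
      have "(\<Sum>i\<in>I. e i * y i) = 0" using True by simp
      then show ?thesis using y Cons by auto
    next
      case False
      then obtain j where j: "j \<in> I" "e j \<noteq> 0" by blast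
      define I' where "I' = I - {j}"
      have finI': "finite I'" using less.prems(1) by (simp add: I'_def)
      define tf where "tf f = (\<lambda>i. f i - f j * e i / e j)" for f :: "'i \<Rightarrow> real"
      have split: "(\<Sum>i\<in>I. f i * z i) = f j * z j + (\<Sum>i\<in>I'. f i * z i)" for f z :: "'i \<Rightarrow> real"
        unfolding I'_def using less.prems(1) j(1) by (simp add: sum.remove)
      have erat: "\<forall>i\<in>I. e i \<in> \<rat>" using less.prems(2) Cons by auto
      have ex: "(\<Sum>i\<in>I. e i * x i) = 0" using less.prems(3) Cons by auto
      have tfsum: "(\<Sum>i\<in>I'. tf f i * z i) = (\<Sum>i\<in>I'. f i * z i) - f j / e j * (\<Sum>i\<in>I'. e i * z i)" for f z
        unfolding tf_def by (simp add: sum_subtractf sum_distrib_left algebra_simps)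
      have p2: "\<forall>f\<in>set (map tf E'). \<forall>i\<in>I'. f i \<in> \<rat>"
        using less.prems(2) Cons j unfolding tf_def I'_def by (auto intro!: Rats_diff Rats_mult Rats_divide)
      have p3: "\<forall>f\<in>set (map tf E'). (\<Sum>i\<in>I'. f i * x i) = 0"
      proof
        fix g assume "g \<in> set (map tf E')"
        then obtain f where f: "f \<in> set E'" "g = tf f" by auto
        have fx: "(\<Sum>i\<in>I. f i * x i) = 0" using less.prems(3) Cons f(1) by auto
        have "(\<Sum>i\<in>I'. e i * x i) = - (e j * x j)" using ex split[of e x] by simp
        then show "(\<Sum>i\<in>I'. g i * x i) = 0" unfolding f(2) tfsum using fx split[of f x] j(2)
          by (simp add: field_simps)
      qed
      define A where "A = (\<Sum>i\<in>I'. \<bar>e i\<bar>)"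
      have A0: "A \<ge> 0" unfolding A_def by (simp add: sum_nonneg)
      define \<delta>' where "\<delta>' = min \<delta> (\<delta> * \<bar>e j\<bar> / (1 + A))"
      have d': "\<delta>' > 0" unfolding \<delta>'_def using less.prems(4) j(2) A0 by simp
      obtain y' where y': "\<forall>i\<in>I'. y' i \<in> \<rat>" "\<forall>f\<in>set (map tf E'). (\<Sum>i\<in>I'. f i * y' i) = 0"
          "\<forall>i\<in>I'. \<bar>y' i - x i\<bar> < \<delta>'"
        using less.hyps[of "map tf E'" I' \<delta>'] finI' p2 p3 d' Cons by auto
      define v where "v = - (\<Sum>i\<in>I'. e i * y' i) / e j"
      define y where "y = y'(j := v)"
      have yI': "(\<Sum>i\<in>I'. f i * y i) = (\<Sum>i\<in>I'. f i * y' i)" for f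
        by (rule sum.cong) (auto simp: y_def I'_def)
      have yj: "y j = v" by (simp add: y_def)
      have ey: "(\<Sum>i\<in>I. e i * y i) = 0" unfolding split yI' yj v_def using j(2) by simp
      have fy: "(\<Sum>i\<in>I. f i * y i) = 0" if f: "f \<in> set E'" for f
      proof -
        have "(\<Sum>i\<in>I'. tf f i * y' i) = 0" using y'(2) f by auto
        then have "(\<Sum>i\<in>I'. f i * y' i) = f j / e j * (\<Sum>i\<in>I'. e i * y' i)" unfolding tfsum by simp
        then show ?thesis unfolding split yI' yj v_def using j(2) by (simp add: field_simps)
      qed
      have xj: "x j = - (\<Sum>i\<in>I'. e i * x i) / e j" using ex split[of e x] j(2) by (simp add: field_simps)
      have "\<bar>y j - x j\<bar> = \<bar>\<Sum>i\<in>I'. e i * (y' i - x i)\<bar> / \<bar>e j\<bar>"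
        unfolding yj v_def xj using j(2)
        by (simp add: sum_subtractf right_diff_distrib field_simps abs_minus_commute)
      also have "\<dots> \<le> (\<Sum>i\<in>I'. \<bar>e i\<bar> * \<delta>') / \<bar>e j\<bar>"
      proof (rule divide_right_mono)
        have "\<bar>\<Sum>i\<in>I'. e i * (y' i - x i)\<bar> \<le> (\<Sum>i\<in>I'. \<bar>e i * (y' i - x i)\<bar>)" by (rule sum_abs)
        also have "\<dots> \<le> (\<Sum>i\<in>I'. \<bar>e i\<bar> * \<delta>')"
        proof (rule sum_mono)
          fix i assume "i \<in> I'"
          then have "\<bar>y' i - x i\<bar> \<le> \<delta>'" using y'(3) by fastforce
          then show "\<bar>e i * (y' i - x i)\<bar> \<le> \<bar>e i\<bar> * \<delta>'" by (simp add: abs_mult mult_left_mono)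
        qed
        finally show "\<bar>\<Sum>i\<in>I'. e i * (y' i - x i)\<bar> \<le> (\<Sum>i\<in>I'. \<bar>e i\<bar> * \<delta>')" .
      qed simp
      also have "\<dots> = A * \<delta>' / \<bar>e j\<bar>" unfolding A_def by (simp add: sum_distrib_right)
      also have "\<dots> \<le> A * (\<delta> * \<bar>e j\<bar> / (1 + A)) / \<bar>e j\<bar>"
        using A0 j(2) by (intro divide_right_mono mult_left_mono) (auto simp: \<delta>'_def)
      also have "\<dots> = (A * (\<delta> / (1 + A))) * \<bar>e j\<bar> / \<bar>e j\<bar>" by (simp add: mult.assoc)
      also have "\<dots> = A * (\<delta> / (1 + A))" using j(2) by simp
      also have "\<dots> = \<delta> * (A / (1 + A))" by simp
      also have "\<dots> < \<delta>" using less.prems(4) A0 by (simp add: field_simps)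
      finally have cj: "\<bar>y j - x j\<bar> < \<delta>" .
      have vrat: "v \<in> \<rat>" unfolding v_def using y'(1) erat j(1)
        by (intro Rats_divide Rats_minus_iff[THEN iffD2] Rats_sum Rats_mult) (auto simp: I'_def)
      show ?thesis
      proof (intro exI[of _ y] conjI ballI)
        fix i assume i: "i \<in> I"
        show "y i \<in> \<rat>" using y'(1) i vrat by (cases "i = j") (auto simp: y_def I'_def)
        show "\<bar>y i - x i\<bar> < \<delta>"
        proof (cases "i = j")
          case True then show ?thesis using cj by simp
        next
          case False then show ?thesis using y'(3) i d' unfolding \<delta>'_def y_def I'_def by force
        qed
      next
        fix f assume "f \<in> set E"
        then show "(\<Sum>i\<in>I. f i * y i) = 0" using ey fy Cons by auto
      qed
    qed
  qed
qed

lemma glue_bij: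
  assumes "finite A" "finite C" "\<And>p. card {a\<in>A. fa a = p} = card {c\<in>C. fc c = p}"
  shows "\<exists>h. bij_betw h A C \<and> (\<forall>a\<in>A. fc (h a) = fa a)"
proof -
  have "\<forall>p. \<exists>h. bij_betw h {a\<in>A. fa a = p} {c\<in>C. fc c = p}"
  proof
    fix p
    show "\<exists>h. bij_betw h {a\<in>A. fa a = p} {c\<in>C. fc c = p}"
      by (rule finite_same_card_bij[OF _ _ assms(3)]) (use assms(1,2) in simp_all)
  qed
  then obtain H where H0: "\<forall>p. bij_betw (H p) {a\<in>A. fa a = p} {c\<in>C. fc c = p}" by (rule choice[THEN exE])
  then have H: "\<And>p. bij_betw (H p) {a\<in>A. fa a = p} {c\<in>C. fc c = p}" by blast
  define h where "h a = H (fa a) a" for a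
  have hin: "h a \<in> C \<and> fc (h a) = fa a" if "a \<in> A" for a
  proof -
    have "a \<in> {a\<in>A. fa a = fa a}" using that by simp
    then have "H (fa a) a \<in> {c\<in>C. fc c = fa a}" using bij_betwE[OF H[of "fa a"]] by blast
    then show ?thesis unfolding h_def by simp
  qed
  have "bij_betw h A C"
    unfolding bij_betw_def
  proof
    show "inj_on h A"
    proof (rule inj_onI)
      fix a a' assume a: "a \<in> A" "a' \<in> A" and e: "h a = h a'"
      have "fa a = fc (h a)" using hin[OF a(1)] by simp
      also have "\<dots> = fc (h a')" using e by (rule arg_cong)
      also have "\<dots> = fa a'" using hin[OF a(2)] by simp
      finally have p: "fa a = fa a'" .
      have e2: "H (fa a) a = H (fa a) a'" using e p unfolding h_def by simp
      have m: "a \<in> {x\<in>A. fa x = fa a}" "a' \<in> {x\<in>A. fa x = fa a}" using a p by auto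
      show "a = a'" by (rule inj_onD[OF bij_betw_imp_inj_on[OF H[of "fa a"]] e2 m])
    qed
    show "h ` A = C"
    proof
      show "h ` A \<subseteq> C" using hin by blast
      show "C \<subseteq> h ` A"
      proof
        fix c assume c: "c \<in> C"
        then have "c \<in> H (fc c) ` {a\<in>A. fa a = fc c}" using bij_betw_imp_surj_on[OF H[of "fc c"]] by blast
        then obtain a where a: "a \<in> A" "fa a = fc c" "c = H (fc c) a" by blast
        then have "h a = c" unfolding h_def by simp
        then show "c \<in> h ` A" using a(1) by blast
      qed
    qed
  qed
  then show ?thesis using hin by blast
qed

lemma bij_extend:
  assumes "bij_betw f S S"
  shows "bij (\<lambda>s. if s \<in> S then f s else s)"
  unfolding bij_def
proof
  have fS: "f s \<in> S" if "s \<in> S" for s using assms that by (auto simp: bij_betw_def)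
  show "inj (\<lambda>s. if s \<in> S then f s else s)"
  proof
    fix x y assume e: "(if x \<in> S then f x else x) = (if y \<in> S then f y else y)"
    show "x = y"
    proof (cases "x \<in> S"; cases "y \<in> S")
      assume "x \<in> S" "y \<in> S" then show ?thesis using e assms by (auto simp: bij_betw_def inj_on_def)
    next
      assume "x \<in> S" "y \<notin> S" then show ?thesis using e fS by auto
    next
      assume "x \<notin> S" "y \<in> S" then show ?thesis using e fS by auto
    next
      assume "x \<notin> S" "y \<notin> S" then show ?thesis using e by auto
    qed
  qed
  show "surj (\<lambda>s. if s \<in> S then f s else s)"
  proof -
    have "y \<in> range (\<lambda>s. if s \<in> S then f s else s)" for y
    proof (cases "y \<in> S")
      case True
      then obtain x where "x \<in> S" "y = f x" using assms by (auto simp: bij_betw_def)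
      then show ?thesis by (intro range_eqI[where x=x]) simp
    next
      case False then show ?thesis by (intro range_eqI[where x=y]) simp
    qed
    then show ?thesis by blast
  qed
qed

lemma slot_perm:
  fixes n :: "nat \<Rightarrow> nat" and Z :: "nat \<Rightarrow> nat \<Rightarrow> nat"
  assumes row: "\<And>p. p < m \<Longrightarrow> (\<Sum>q<m. Z p q) = n p"
    and col: "\<And>q. q < m \<Longrightarrow> (\<Sum>p<m. Z p q) = n q"
  defines "Sl \<equiv> {(p,t). p < m \<and> t < n p}"
  shows "\<exists>\<sigma>. bij \<sigma> \<and> (\<forall>s. s \<in> Sl \<longleftrightarrow> \<sigma> s \<in> Sl) \<and> (\<forall>s\<in>Sl. Z (fst s) (fst (\<sigma> s)) > 0)"
proof -
  define R where "R = {(p,q,t). p < m \<and> q < m \<and> t < Z p q}"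
  have SlS: "Sl = Sigma {..<m} (\<lambda>p. {..<n p})" unfolding Sl_def by auto
  have RS: "R = Sigma {..<m} (\<lambda>p. Sigma {..<m} (\<lambda>q. {..<Z p q}))" unfolding R_def by auto
  have finSl: "finite Sl" unfolding SlS by auto
  have finR: "finite R" unfolding RS by auto
  have c1: "card {s\<in>Sl. fst s = p} = (if p < m then n p else 0)" for p
  proof -
    have "{s\<in>Sl. fst s = p} = (if p < m then {p} \<times> {..<n p} else {})" unfolding Sl_def by auto
    then show ?thesis by (simp add: card_cartesian_product)
  qed
  have c2: "card {r\<in>R. fst r = p} = (if p < m then n p else 0)" for p
  proof -
    have "{r\<in>R. fst r = p} = (if p < m then {p} \<times> Sigma {..<m} (\<lambda>q. {..<Z p q}) else {})"
      unfolding R_def by auto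
    then show ?thesis using row[of p] by (simp add: card_cartesian_product)
  qed
  have c3: "card {r\<in>R. fst (snd r) = q} = (if q < m then n q else 0)" for q
  proof (cases "q < m")
    case True
    have "{r\<in>R. fst (snd r) = q} = (\<lambda>(p,t). (p,q,t)) ` Sigma {..<m} (\<lambda>p. {..<Z p q})"
      unfolding R_def using True by auto
    moreover have "inj_on (\<lambda>(p,t). (p,q,t)) (Sigma {..<m} (\<lambda>p. {..<Z p q}))"
      by (auto simp: inj_on_def)
    ultimately have "card {r\<in>R. fst (snd r) = q} = card (Sigma {..<m} (\<lambda>p. {..<Z p q}))"
      by (simp add: card_image)
    then show ?thesis using True col[of q] by simp
  next
    case False
    have e: "{r\<in>R. fst (snd r) = q} = {}" unfolding R_def using False by auto
    show ?thesis unfolding e using False by simp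
  qed
  obtain \<rho> where \<rho>: "bij_betw \<rho> Sl R" "\<forall>s\<in>Sl. fst (\<rho> s) = fst s"
    using glue_bij[OF finSl finR, of fst fst] c1 c2 by auto
  obtain \<kappa> where \<kappa>: "bij_betw \<kappa> R Sl" "\<forall>r\<in>R. fst (\<kappa> r) = fst (snd r)"
    using glue_bij[OF finR finSl, of "\<lambda>r. fst (snd r)" fst] c1 c3 by auto
  define \<sigma>0 where "\<sigma>0 = \<kappa> \<circ> \<rho>"
  have b0: "bij_betw \<sigma>0 Sl Sl" unfolding \<sigma>0_def using \<rho>(1) \<kappa>(1) by (rule bij_betw_trans)
  define \<sigma> where "\<sigma> s = (if s \<in> Sl then \<sigma>0 s else s)" for s
  have "bij \<sigma>" unfolding \<sigma>_def[abs_def] using b0 by (rule bij_extend)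
  moreover have "s \<in> Sl \<longleftrightarrow> \<sigma> s \<in> Sl" for s
    using b0 unfolding \<sigma>_def by (auto simp: bij_betw_def)
  moreover have "Z (fst s) (fst (\<sigma> s)) > 0" if s: "s \<in> Sl" for s
  proof -
    have r: "\<rho> s \<in> R" using \<rho>(1) s by (auto simp: bij_betw_def)
    then have "Z (fst (\<rho> s)) (fst (snd (\<rho> s))) > 0" unfolding R_def by auto
    then show ?thesis using \<rho>(2) \<kappa>(2) r s unfolding \<sigma>_def \<sigma>0_def by simp
  qed
  ultimately show ?thesis by blast
qed

lemma finite_pos_min:
  assumes "finite B" "\<forall>b\<in>B. \<exists>d>0. P b d" "\<And>b d d'. P b d \<Longrightarrow> 0 < d' \<Longrightarrow> d' \<le> d \<Longrightarrow> P b d'"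
  shows "\<exists>d>0. \<forall>b\<in>B. P b (d::real)"
  using assms(1,2)
proof (induction B rule: finite_induct)
  case empty then show ?case by (intro exI[of _ 1]) simp
next
  case (insert x F)
  obtain d1 where d1: "d1 > 0" "\<forall>b\<in>F. P b d1" using insert by auto
  obtain d2 where d2: "d2 > 0" "P x d2" using insert.prems by auto
  show ?case
  proof (intro exI[of _ "min d1 d2"] conjI ballI)
    show "min d1 d2 > 0" using d1 d2 by simp
    fix b assume "b \<in> insert x F"
    then show "P b (min d1 d2)"
    proof
      assume "b = x" then show ?thesis using assms(3)[OF d2(2)] d1 d2 by simp
    next
      assume "b \<in> F" then show ?thesis using assms(3)[OF d1(2)[rule_format, OF \<open>b \<in> F\<close>]] d1 d2 by simp
    qed
  qed
qed

locale setting =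
  fixes \<Gamma> :: "'g::{group_add, metric_space} set"
  assumes add_cont: "continuous_on UNIV (\<lambda>p::'g \<times> 'g. fst p + snd p)"
    and minus_cont: "continuous_on UNIV (uminus :: 'g \<Rightarrow> 'g)"
    and left_inv: "\<forall>g x y::'g. dist (g + x) (g + y) = dist x y"
    and proper: "\<forall>(x::'g) r. compact (cball x r)"
    and subgrp: "is_subgroup \<Gamma>"
    and discrete: "\<forall>\<gamma>\<in>\<Gamma>. \<exists>e>0. \<forall>\<gamma>'\<in>\<Gamma>. dist \<gamma> \<gamma>' < e \<longrightarrow> \<gamma>' = \<gamma>"
    and cocompact: "\<exists>K. compact K \<and> (\<forall>g. \<exists>k\<in>K. \<exists>\<gamma>\<in>\<Gamma>. g = k + \<gamma>)"
begin

lemma dl: "dist (g + x) (g + y) = dist x (y::'g)" using left_inv by blast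

lemma G0: "0 \<in> \<Gamma>" and Gadd: "x \<in> \<Gamma> \<Longrightarrow> y \<in> \<Gamma> \<Longrightarrow> x + y \<in> \<Gamma>" and Gmin: "x \<in> \<Gamma> \<Longrightarrow> - x \<in> \<Gamma>"
  using subgrp unfolding is_subgroup_def by blast+

lemma Gdiff: "x \<in> \<Gamma> \<Longrightarrow> y \<in> \<Gamma> \<Longrightarrow> x - y \<in> \<Gamma>"
  using Gadd[OF _ Gmin, of x y] by (simp add: diff_conv_add_uminus del: add_uminus_conv_diff)

lemma cont_add_fun:
  fixes f g :: "'a::topological_space \<Rightarrow> 'g"
  assumes "continuous_on UNIV f" "continuous_on UNIV g"
  shows "continuous_on UNIV (\<lambda>x. f x + g x)"
proof -
  have "continuous_on UNIV (\<lambda>x. (f x, g x))" using assms by (rule continuous_on_Pair)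
  then have "continuous_on UNIV ((\<lambda>p. fst p + snd p) \<circ> (\<lambda>x. (f x, g x)))"
    by (rule continuous_on_compose) (rule continuous_on_subset[OF add_cont], simp)
  then show ?thesis by (simp add: o_def)
qed

lemma cont_minus_fun:
  fixes f :: "'a::topological_space \<Rightarrow> 'g"
  assumes "continuous_on UNIV f"
  shows "continuous_on UNIV (\<lambda>x. - f x)"
proof -
  have "continuous_on UNIV (uminus \<circ> f)"
    using assms by (rule continuous_on_compose) (rule continuous_on_subset[OF minus_cont], simp)
  then show ?thesis by (simp add: o_def)
qed

lemma cont_left: "continuous_on UNIV (\<lambda>x::'g. g + x)"
  by (rule cont_add_fun) (auto intro: continuous_on_const continuous_on_id)

lemma cont_right: "continuous_on UNIV (\<lambda>x::'g. x + g)"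
  by (rule cont_add_fun) (auto intro: continuous_on_const continuous_on_id)

lemma contD: "continuous_on UNIV f \<Longrightarrow> e > 0 \<Longrightarrow> \<exists>d>0. \<forall>y. dist y x < d \<longrightarrow> dist (f y) (f x) < e"
  unfolding continuous_on_iff by blast

lemma e0_ex: "\<exists>e0>0. \<forall>\<gamma>\<in>\<Gamma>. \<forall>\<gamma>'\<in>\<Gamma>. dist \<gamma> \<gamma>' < e0 \<longrightarrow> \<gamma> = \<gamma>'"
proof -
  have "\<exists>e>0. \<forall>\<gamma>'\<in>\<Gamma>. dist 0 \<gamma>' < e \<longrightarrow> \<gamma>' = 0" using discrete G0 by (rule bspec)
  then obtain e where e: "e > 0" "\<forall>\<gamma>'\<in>\<Gamma>. dist 0 \<gamma>' < e \<longrightarrow> \<gamma>' = 0" by blast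
  have "\<gamma> = \<gamma>'" if "\<gamma> \<in> \<Gamma>" "\<gamma>' \<in> \<Gamma>" "dist \<gamma> \<gamma>' < e" for \<gamma> \<gamma>'
  proof -
    have "dist 0 (- \<gamma> + \<gamma>') = dist \<gamma> \<gamma>'" using dl[of "-\<gamma>" \<gamma> \<gamma>'] by simp
    then have "dist 0 (- \<gamma> + \<gamma>') < e" using that(3) by simp
    then have "- \<gamma> + \<gamma>' = 0" using e(2) Gadd[OF Gmin[OF that(1)] that(2)] by blast
    moreover have "\<gamma>' = \<gamma> + (- \<gamma> + \<gamma>')" by simp
    ultimately show ?thesis by simp
  qed
  then show ?thesis using e(1) by blast
qed

lemma countG: "countable \<Gamma>"
proof -
  obtain e0 where e0: "e0 > 0" "\<forall>\<gamma>\<in>\<Gamma>. \<forall>\<gamma>'\<in>\<Gamma>. dist \<gamma> \<gamma>' < e0 \<longrightarrow> \<gamma> = \<gamma>'" using e0_ex by blast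
  have fin: "finite (\<Gamma> \<inter> cball 0 (real n))" for n :: nat
  proof -
    have sc: "seq_compact (cball (0::'g) (real n))" using proper compact_imp_seq_compact by blast
    have e2: "e0/2 > 0" using e0(1) by simp
    obtain k :: "'g set" where k: "finite k" "k \<subseteq> cball 0 (real n)" "cball 0 (real n) \<subseteq> (\<Union>x\<in>k. ball x (e0/2))"
      using seq_compact_imp_totally_bounded[OF sc, rule_format, OF e2] by blast
    define f where "f \<gamma> = (SOME x. x \<in> k \<and> \<gamma> \<in> ball x (e0/2))" for \<gamma>
    have f: "f \<gamma> \<in> k \<and> \<gamma> \<in> ball (f \<gamma>) (e0/2)" if "\<gamma> \<in> cball 0 (real n)" for \<gamma>
    proof -
      have "\<gamma> \<in> (\<Union>x\<in>k. ball x (e0/2))" using k(3) that by (rule subsetD)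
      then have "\<exists>x. x \<in> k \<and> \<gamma> \<in> ball x (e0/2)" by (rule UN_E) blast
      then show ?thesis unfolding f_def by (rule someI_ex)
    qed
    have "inj_on f (\<Gamma> \<inter> cball 0 (real n))"
    proof (rule inj_onI)
      fix x y assume x: "x \<in> \<Gamma> \<inter> cball 0 (real n)" and y: "y \<in> \<Gamma> \<inter> cball 0 (real n)" and e: "f x = f y"
      have fx: "dist (f x) x < e0/2" using f[of x] x by simp
      have fy: "dist (f x) y < e0/2" using f[of y] y e by simp
      have "dist x y \<le> dist (f x) x + dist (f x) y" by (rule dist_triangle3)
      also have "\<dots> < e0/2 + e0/2" using fx fy by (rule add_strict_mono)
      finally have "dist x y < e0" by simp
      then show "x = y" using e0(2) x y by blast
    qed
    moreover have "f ` (\<Gamma> \<inter> cball 0 (real n)) \<subseteq> k" using f by blast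
    ultimately show ?thesis using k(1) by (rule inj_on_finite)
  qed
  have eq: "\<Gamma> = (\<Union>n. \<Gamma> \<inter> cball 0 (real n))"
  proof
    show "\<Gamma> \<subseteq> (\<Union>n. \<Gamma> \<inter> cball 0 (real n))"
    proof
      fix x assume "x \<in> \<Gamma>"
      moreover obtain n where "dist 0 x \<le> real n" using real_arch_simple by blast
      ultimately show "x \<in> (\<Union>n. \<Gamma> \<inter> cball 0 (real n))" by auto
    qed
  qed blast
  have c: "countable (\<Union>n. \<Gamma> \<inter> cball 0 (real n))"
    using fin by (intro countable_UN) (auto intro: countable_finite)
  show ?thesis by (subst eq) (rule c)
qed

lemma cover_ex: "\<exists>L. compact L \<and> (\<forall>g. \<exists>\<gamma>\<in>\<Gamma>. \<exists>l\<in>L. g = \<gamma> + l)"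
proof -
  obtain K where K: "compact K" "\<forall>g. \<exists>k\<in>K. \<exists>\<gamma>\<in>\<Gamma>. g = k + \<gamma>" using cocompact by blast
  have cL: "compact (uminus ` K)"
    by (rule compact_continuous_image[OF continuous_on_subset[OF minus_cont] K(1)]) simp
  have "\<exists>\<gamma>\<in>\<Gamma>. \<exists>l\<in>uminus ` K. g = \<gamma> + l" for g
  proof -
    obtain k \<gamma> where "k \<in> K" "\<gamma> \<in> \<Gamma>" "- g = k + \<gamma>" using K(2) by blast
    moreover have "g = - (- g)" by simp
    ultimately have "g = - \<gamma> + - k" by (simp add: minus_add)
    moreover have "- \<gamma> \<in> \<Gamma>" using Gmin \<open>\<gamma> \<in> \<Gamma>\<close> by blast
    moreover have "- k \<in> uminus ` K" using \<open>k \<in> K\<close> by blast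
    ultimately show ?thesis by blast
  qed
  then show ?thesis using cL by blast
qed

end

context setting begin

lemma radius_ex:
  fixes a :: "'f \<Rightarrow> 'g" and c :: 'g
  assumes B: "finite B" and eta: "\<eta> > 0" and e0: "e0 > 0" "\<forall>\<gamma>\<in>\<Gamma>. \<forall>\<gamma>'\<in>\<Gamma>. dist \<gamma> \<gamma>' < e0 \<longrightarrow> \<gamma> = \<gamma>'"
  shows "\<exists>r>0. r \<le> 1 \<and> (\<forall>x\<in>ball c r. \<forall>y\<in>ball c r. dist x y < \<eta> \<and>
            (\<forall>b\<in>B. dist (x + a b) (y + a b) < \<eta>) \<and> (y - x \<in> \<Gamma> \<longrightarrow> x = y))"
proof -
  have eta2: "\<eta>/2 > 0" using eta by simp
  have "\<forall>b\<in>B. \<exists>d>0. \<forall>x. dist x c < d \<longrightarrow> dist (x + a b) (c + a b) < \<eta>/2"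
    using contD[OF cont_right eta2] by blast
  then obtain d2 where d2: "d2 > 0" "\<forall>b\<in>B. \<forall>x. dist x c < d2 \<longrightarrow> dist (x + a b) (c + a b) < \<eta>/2"
    using finite_pos_min[OF B, of "\<lambda>b d. \<forall>x. dist x c < d \<longrightarrow> dist (x + a b) (c + a b) < \<eta>/2"]
    by fastforce
  define h where "h p = snd p + - fst p" for p :: "'g \<times> 'g"
  have hc: "continuous_on UNIV h" unfolding h_def
    by (intro cont_add_fun cont_minus_fun continuous_on_fst continuous_on_snd continuous_on_id)
  obtain d3 where d3: "d3 > 0" "\<forall>p. dist p (c,c) < d3 \<longrightarrow> dist (h p) (h (c,c)) < e0"
    using contD[OF hc e0(1), of "(c,c)"] by blast
  define r where "r = min 1 (min (\<eta>/2) (min d2 (d3/2)))"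
  have r: "r > 0" "r \<le> 1" "r \<le> \<eta>/2" "r \<le> d2" "r \<le> d3/2" unfolding r_def using eta d2(1) d3(1) by auto
  have P: "dist x y < \<eta> \<and> (\<forall>b\<in>B. dist (x + a b) (y + a b) < \<eta>) \<and> (y - x \<in> \<Gamma> \<longrightarrow> x = y)"
    if x: "x \<in> ball c r" and y: "y \<in> ball c r" for x y
  proof (intro conjI ballI impI)
    have dx: "dist x c < r" "dist c x < r" using x by (auto simp: dist_commute)
    have dy: "dist y c < r" "dist c y < r" using y by (auto simp: dist_commute)
    have "dist x y \<le> dist c x + dist c y" by (rule dist_triangle3)
    also have "\<dots> < \<eta>/2 + \<eta>/2" using dx dy r by linarith
    finally show "dist x y < \<eta>" by simp
    fix b assume b: "b \<in> B"
    have 1: "dist (x + a b) (c + a b) < \<eta>/2" using d2(2) b dx r by fastforce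
    have 2: "dist (y + a b) (c + a b) < \<eta>/2" using d2(2) b dy r by fastforce
    have "dist (x + a b) (y + a b) \<le> dist (x + a b) (c + a b) + dist (y + a b) (c + a b)"
      by (rule dist_triangle2)
    also have "\<dots> < \<eta>/2 + \<eta>/2" using 1 2 by (rule add_strict_mono)
    finally show "dist (x + a b) (y + a b) < \<eta>" by simp
  next
    assume g: "y - x \<in> \<Gamma>"
    have dx: "dist x c < r" "dist c x < r" using x by (auto simp: dist_commute)
    have dy: "dist y c < r" "dist c y < r" using y by (auto simp: dist_commute)
    have "dist (x, y) (c, c) = sqrt ((dist x c)\<^sup>2 + (dist y c)\<^sup>2)" by (rule dist_Pair_Pair)
    also have "\<dots> \<le> \<bar>dist x c\<bar> + \<bar>dist y c\<bar>" by (rule sqrt_sum_squares_le_sum_abs)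
    also have "\<dots> < d3" using dx dy r by simp
    finally have "dist (h (x,y)) (h (c,c)) < e0" using d3(2) by blast
    then have "dist (y - x) 0 < e0" unfolding h_def by simp
    then have "dist (y - x) 0 < e0" by simp
    then have "y - x = 0" using e0(2) g G0 by blast
    then show "x = y" by simp
  qed
  show ?thesis using r P by blast
qed

end

context setting begin

definition GX :: "'g set \<Rightarrow> 'g set" where "GX X = {\<gamma> + x | \<gamma> x. \<gamma> \<in> \<Gamma> \<and> x \<in> X}"

lemma GX_UN: "GX X = (\<Union>\<gamma>\<in>\<Gamma>. (\<lambda>x. \<gamma> + x) ` X)" unfolding GX_def by blast

lemma trans_image: "(\<lambda>x::'g. g + x) ` X = (\<lambda>x. - g + x) -` X"
proof
  show "(\<lambda>x. g + x) ` X \<subseteq> (\<lambda>x. - g + x) -` X" by auto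
  show "(\<lambda>x. - g + x) -` X \<subseteq> (\<lambda>x. g + x) ` X"
  proof
    fix y assume "y \<in> (\<lambda>x. - g + x) -` X"
    then have "- g + y \<in> X" by simp
    moreover have "y = g + (- g + y)" by simp
    ultimately show "y \<in> (\<lambda>x. g + x) ` X" by blast
  qed
qed

lemma open_GX: "open X \<Longrightarrow> open (GX X)"
  unfolding GX_UN trans_image by (intro open_UN ballI open_vimage cont_left)

lemma pieces:
  fixes a :: "'f \<Rightarrow> 'g"
  assumes B: "finite B" and eta: "\<eta> > 0"
  shows "\<exists>(m::nat) (D::nat \<Rightarrow> 'g set). m > 0 \<and>
    (\<forall>g. \<exists>p<m. \<exists>\<gamma>\<in>\<Gamma>. \<exists>d\<in>D p. g = \<gamma> + d) \<and>
    (\<forall>p<m. \<forall>p'<m. \<forall>\<gamma>\<in>\<Gamma>. \<forall>\<gamma>'\<in>\<Gamma>. \<forall>d\<in>D p. \<forall>d'\<in>D p'. \<gamma> + d = \<gamma>' + d' \<longrightarrow> p = p' \<and> \<gamma> = \<gamma>' \<and> d = d') \<and>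
    0 \<in> D 0 \<and> open (D 0) \<and>
    (\<forall>p<m. D p \<in> sets borel) \<and>
    (\<forall>p<m. \<exists>c. D p \<subseteq> cball c 1) \<and>
    (\<forall>p<m. \<forall>x\<in>D p. \<forall>y\<in>D p. dist x y < \<eta> \<and> (\<forall>b\<in>B. dist (x + a b) (y + a b) < \<eta>))"
proof -
  obtain e0 where e0: "e0 > 0" "\<forall>\<gamma>\<in>\<Gamma>. \<forall>\<gamma>'\<in>\<Gamma>. dist \<gamma> \<gamma>' < e0 \<longrightarrow> \<gamma> = \<gamma>'" using e0_ex by blast
  obtain L where L: "compact L" "\<forall>g. \<exists>\<gamma>\<in>\<Gamma>. \<exists>l\<in>L. g = \<gamma> + l" using cover_ex by blast
  define Q where "Q c r \<longleftrightarrow> r > 0 \<and> r \<le> 1 \<and> (\<forall>x\<in>ball c r. \<forall>y\<in>ball c r. dist x y < \<eta> \<and>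
            (\<forall>b\<in>B. dist (x + a b) (y + a b) < \<eta>) \<and> (y - x \<in> \<Gamma> \<longrightarrow> x = y))" for c r
  define R where "R c = (SOME r. Q c r)" for c
  have R: "Q c (R c)" for c
  proof -
    have "\<exists>r. Q c r" unfolding Q_def using radius_ex[OF B eta e0] by blast
    then show ?thesis unfolding R_def by (rule someI_ex)
  qed
  have Rpos: "R c > 0" for c using R[of c] unfolding Q_def by blast
  have "L \<subseteq> (\<Union>c\<in>L. ball c (R c))" using Rpos by auto
  then obtain C0 where C0: "C0 \<subseteq> L" "finite C0" "L \<subseteq> (\<Union>c\<in>C0. ball c (R c))"
    using compactE_image[OF L(1), of L "\<lambda>c. ball c (R c)"] by blast
  obtain xs where xs: "set xs = C0" using finite_list[OF C0(2)] by blast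
  define cs where "cs = (0::'g) # xs"
  define m where "m = length cs"
  define V where "V p = ball (cs ! p) (R (cs ! p))" for p
  define D where "D p = V p - GX (\<Union>p'\<in>{..<p}. V p')" for p
  have Vprop: "\<forall>x\<in>V p. \<forall>y\<in>V p. dist x y < \<eta> \<and> (\<forall>b\<in>B. dist (x + a b) (y + a b) < \<eta>) \<and> (y - x \<in> \<Gamma> \<longrightarrow> x = y)" for p
    using R[of "cs ! p"] unfolding Q_def V_def by blast
  have DV: "D p \<subseteq> V p" for p unfolding D_def by blast
  have m0: "m > 0" unfolding m_def cs_def by simp
  have D0: "D 0 = V 0" unfolding D_def GX_def by simp
  have z0: "0 \<in> D 0" unfolding D0 V_def cs_def using Rpos by simp
  have oD0: "open (D 0)" unfolding D0 V_def by simp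
  have bor: "D p \<in> sets borel" for p
    unfolding D_def V_def by (intro sets.Diff borel_open open_GX open_UN ballI open_ball)
  have cb: "\<exists>c. D p \<subseteq> cball c 1" for p
  proof -
    have "R (cs ! p) \<le> 1" using R[of "cs ! p"] unfolding Q_def by blast
    then have "V p \<subseteq> cball (cs ! p) 1" unfolding V_def by auto
    then show ?thesis using DV by blast
  qed
  have GXI: "\<gamma> + x \<in> GX X" if "\<gamma> \<in> \<Gamma>" "x \<in> X" for \<gamma> x X unfolding GX_def using that by blast
  have F1: "\<exists>p<m. \<exists>\<gamma>\<in>\<Gamma>. \<exists>d\<in>D p. g = \<gamma> + d" for g
  proof -
    obtain \<gamma> l where gl: "\<gamma> \<in> \<Gamma>" "l \<in> L" "g = \<gamma> + l" using L(2) by blast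
    obtain c where c: "c \<in> C0" "l \<in> ball c (R c)" using C0(3) gl(2) by blast
    obtain i where i: "i < length xs" "xs ! i = c" using c(1) xs by (auto simp: in_set_conv_nth)
    have si: "Suc i < m" "V (Suc i) = ball c (R c)" using i unfolding m_def V_def cs_def by auto
    have "g \<in> GX (V (Suc i))" unfolding si(2) gl(3) using GXI[OF gl(1) c(2)] .
    then have ex: "\<exists>p. p < m \<and> g \<in> GX (V p)" using si(1) by blast
    define p where "p = (LEAST p. p < m \<and> g \<in> GX (V p))"
    have p: "p < m" "g \<in> GX (V p)" using LeastI_ex[OF ex] unfolding p_def by blast+
    have pmin: "\<not> (p' < m \<and> g \<in> GX (V p'))" if "p' < p" for p'
      using not_less_Least[OF that[unfolded p_def]] unfolding p_def by blast
    obtain \<gamma>1 v where v: "\<gamma>1 \<in> \<Gamma>" "v \<in> V p" "g = \<gamma>1 + v" using p(2) unfolding GX_def by blast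
    have "v \<notin> GX (\<Union>p'\<in>{..<p}. V p')"
    proof
      assume "v \<in> GX (\<Union>p'\<in>{..<p}. V p')"
      then obtain \<gamma>2 v' p' where w: "\<gamma>2 \<in> \<Gamma>" "p' < p" "v' \<in> V p'" "v = \<gamma>2 + v'" unfolding GX_def by blast
      have "g = (\<gamma>1 + \<gamma>2) + v'" using v(3) w(4) by (simp add: add.assoc)
      then have "g \<in> GX (V p')" using GXI[OF Gadd[OF v(1) w(1)] w(3)] by simp
      moreover have "p' < m" using w(2) p(1) by simp
      ultimately show False using pmin[OF w(2)] by blast
    qed
    then have "v \<in> D p" using v(2) unfolding D_def by blast
    then show ?thesis using p(1) v(1,3) by blast
  qed
  have lt: False if "p < p'" "\<gamma> \<in> \<Gamma>" "\<gamma>' \<in> \<Gamma>" "d \<in> D p" "d' \<in> D p'" "\<gamma> + d = \<gamma>' + d'" for p p' \<gamma> \<gamma>' d d'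
  proof -
    have "d' = (- \<gamma>' + \<gamma>) + d"
    proof -
      have "d' = - \<gamma>' + (\<gamma>' + d')" by simp
      also have "\<dots> = - \<gamma>' + (\<gamma> + d)" using that(6) by simp
      finally show ?thesis by (simp add: add.assoc)
    qed
    moreover have "d \<in> (\<Union>p''\<in>{..<p'}. V p'')" using that(1,4) DV by blast
    ultimately have "d' \<in> GX (\<Union>p''\<in>{..<p'}. V p'')" using GXI[OF Gadd[OF Gmin[OF that(3)] that(2)]] by simp
    then show False using that(5) unfolding D_def by blast
  qed
  have F2: "p = p' \<and> \<gamma> = \<gamma>' \<and> d = d'"
    if "\<gamma> \<in> \<Gamma>" "\<gamma>' \<in> \<Gamma>" "d \<in> D p" "d' \<in> D p'" "\<gamma> + d = \<gamma>' + d'" for p p' \<gamma> \<gamma>' d d'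
  proof -
    have pp: "p = p'"
    proof (rule ccontr)
      assume "p \<noteq> p'"
      then consider "p < p'" | "p' < p" by linarith
      then show False
      proof cases
        case 1 then show False using lt[OF 1 that] by blast
      next
        case 2 then show False using lt[OF 2 that(2,1,4,3) that(5)[symmetric]] by blast
      qed
    qed
    have "d' = (- \<gamma>' + \<gamma>) + d"
    proof -
      have "d' = - \<gamma>' + (\<gamma>' + d')" by simp
      also have "\<dots> = - \<gamma>' + (\<gamma> + d)" using that(5) by simp
      finally show ?thesis by (simp add: add.assoc)
    qed
    then have "d' - d = - \<gamma>' + \<gamma>" by simp
    then have "d' - d \<in> \<Gamma>" using Gadd[OF Gmin[OF that(2)] that(1)] by simp
    moreover have "d \<in> V p" "d' \<in> V p" using that(3,4) DV pp by blast+
    ultimately have dd: "d = d'" using Vprop[of p] by blast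
    then have "\<gamma> = \<gamma>'" using that(5) by simp
    then show ?thesis using pp dd by blast
  qed
  have A2: "\<forall>p<m. \<forall>p'<m. \<forall>\<gamma>\<in>\<Gamma>. \<forall>\<gamma>'\<in>\<Gamma>. \<forall>d\<in>D p. \<forall>d'\<in>D p'. \<gamma> + d = \<gamma>' + d' \<longrightarrow> p = p' \<and> \<gamma> = \<gamma>' \<and> d = d'"
  proof (intro allI impI ballI)
    fix p p' \<gamma> \<gamma>' d d' assume "p < m" "p' < m" "\<gamma> \<in> \<Gamma>" "\<gamma>' \<in> \<Gamma>" "d \<in> D p" "d' \<in> D p'" "\<gamma> + d = \<gamma>' + d'"
    then show "p = p' \<and> \<gamma> = \<gamma>' \<and> d = d'" using F2 by presburger
  qed
  have A3: "\<forall>p<m. \<forall>x\<in>D p. \<forall>y\<in>D p. dist x y < \<eta> \<and> (\<forall>b\<in>B. dist (x + a b) (y + a b) < \<eta>)"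
  proof (intro allI impI ballI)
    fix p x y assume "p < m" "x \<in> D p" "y \<in> D p"
    then have xy: "x \<in> V p" "y \<in> V p" using DV by blast+
    have "dist x y < \<eta> \<and> (\<forall>b\<in>B. dist (x + a b) (y + a b) < \<eta>) \<and> (y - x \<in> \<Gamma> \<longrightarrow> x = y)"
      using Vprop[of p] xy by blast
    then show "dist x y < \<eta> \<and> (\<forall>b\<in>B. dist (x + a b) (y + a b) < \<eta>)" by blast
  qed
  have A1: "\<forall>g. \<exists>p<m. \<exists>\<gamma>\<in>\<Gamma>. \<exists>d\<in>D p. g = \<gamma> + d" using F1 by blast
  have A4: "\<forall>p<m. D p \<in> sets borel" using bor by blast
  have A5: "\<forall>p<m. \<exists>c. D p \<subseteq> cball c 1" using cb by blast
  show ?thesis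
    by (rule exI[where x=m], rule exI[where x=D], intro conjI m0 A1 A2 z0 oD0 A4 A5 A3)
qed

end

context setting begin

lemma borel_left: "A \<in> sets borel \<Longrightarrow> (\<lambda>x::'g. g + x) ` A \<in> sets borel"
  unfolding trans_image by (rule measurable_sets_borel[OF borel_measurable_continuous_onI[OF cont_left]])

lemma trans_image_r: "(\<lambda>x::'g. x + g) ` X = (\<lambda>x. x + - g) -` X"
proof
  show "(\<lambda>x. x + g) ` X \<subseteq> (\<lambda>x. x + - g) -` X" by auto
  show "(\<lambda>x. x + - g) -` X \<subseteq> (\<lambda>x. x + g) ` X"
  proof
    fix y assume "y \<in> (\<lambda>x. x + - g) -` X"
    then have "y + - g \<in> X" by simp
    moreover have "y = (y + - g) + g" by (simp add: add.assoc)
    ultimately show "y \<in> (\<lambda>x. x + g) ` X" by blast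
  qed
qed

lemma borel_right: "A \<in> sets borel \<Longrightarrow> (\<lambda>x::'g. x + g) ` A \<in> sets borel"
  unfolding trans_image_r by (rule measurable_sets_borel[OF borel_measurable_continuous_onI[OF cont_right]])

lemma borel_pre_right: "A \<in> sets borel \<Longrightarrow> (\<lambda>x::'g. x + g) -` A \<in> sets borel"
  by (rule measurable_sets_borel[OF borel_measurable_continuous_onI[OF cont_right]])

lemma borel_GX: "A \<in> sets borel \<Longrightarrow> GX A \<in> sets borel"
  unfolding GX_UN by (rule sets.countable_UN''[OF countG]) (rule borel_left)

lemma transport:
  fixes M :: "'g measure" and a :: 'g and m :: nat and D :: "nat \<Rightarrow> 'g set"
  assumes sM: "sets M = sets borel"
    and invl: "\<And>g A. A \<in> sets borel \<Longrightarrow> emeasure M ((\<lambda>x. g + x) ` A) = emeasure M A"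
    and invr: "\<And>g A. A \<in> sets borel \<Longrightarrow> emeasure M ((\<lambda>x. x + g) ` A) = emeasure M A"
    and F1: "\<And>g. \<exists>p<m. \<exists>\<gamma>\<in>\<Gamma>. \<exists>d\<in>D p. g = \<gamma> + d"
    and F2: "\<And>p p' \<gamma> \<gamma>' d d'. p < m \<Longrightarrow> p' < m \<Longrightarrow> \<gamma> \<in> \<Gamma> \<Longrightarrow> \<gamma>' \<in> \<Gamma> \<Longrightarrow> d \<in> D p \<Longrightarrow> d' \<in> D p' \<Longrightarrow>
          \<gamma> + d = \<gamma>' + d' \<Longrightarrow> p = p' \<and> \<gamma> = \<gamma>' \<and> d = d'"
    and bor: "\<And>p. p < m \<Longrightarrow> D p \<in> sets borel"
  defines "T \<equiv> (\<lambda>q. {x. x + a \<in> GX (D q)})"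
  shows "\<And>q. q < m \<Longrightarrow> T q \<in> sets borel"
    and "\<And>p. p < m \<Longrightarrow> emeasure M (D p) = (\<Sum>q<m. emeasure M (D p \<inter> T q))"
    and "\<And>q. q < m \<Longrightarrow> (\<Sum>p<m. emeasure M (D p \<inter> T q)) = emeasure M (D q)"
proof -
  have Tb: "T q \<in> sets borel" if "q < m" for q
  proof -
    have "T q = (\<lambda>x. x + a) -` GX (D q)" unfolding T_def by auto
    then show ?thesis using borel_pre_right[OF borel_GX[OF bor[OF that]]] by simp
  qed
  then show "\<And>q. q < m \<Longrightarrow> T q \<in> sets borel" .
  have GXE: "\<exists>\<gamma> d. \<gamma> \<in> \<Gamma> \<and> d \<in> X \<and> z = \<gamma> + d" if "z \<in> GX X" for z X using that unfolding GX_def by blast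
  have GXI: "\<gamma> + x \<in> GX X" if "\<gamma> \<in> \<Gamma>" "x \<in> X" for \<gamma> x X unfolding GX_def using that by blast
  show "emeasure M (D p) = (\<Sum>q<m. emeasure M (D p \<inter> T q))" if p: "p < m" for p
  proof (rule sum_emeasure_cover)
    show "finite {..<m}" by simp
    show "D p \<in> sets M" using bor[OF p] sM by simp
    show "T ` {..<m} \<subseteq> sets M" using Tb sM by auto
    show "D p \<subseteq> (\<Union>i\<in>{..<m}. T i)"
    proof
      fix x assume "x \<in> D p"
      obtain q \<gamma> d where "q < m" "\<gamma> \<in> \<Gamma>" "d \<in> D q" "x + a = \<gamma> + d" using F1[of "x + a"] by blast
      then have "x \<in> T q" unfolding T_def using GXI by simp
      then show "x \<in> (\<Union>i\<in>{..<m}. T i)" using \<open>q < m\<close> by blast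
    qed
    show "disjoint_family_on T {..<m}"
      unfolding disjoint_family_on_def
    proof (intro ballI impI)
      fix q q' assume q: "q \<in> {..<m}" "q' \<in> {..<m}" "q \<noteq> q'"
      show "T q \<inter> T q' = {}"
      proof (rule ccontr)
        assume "T q \<inter> T q' \<noteq> {}"
        then obtain x where "x + a \<in> GX (D q)" "x + a \<in> GX (D q')" unfolding T_def by blast
        then obtain \<gamma> d \<gamma>' d' where "\<gamma> \<in> \<Gamma>" "d \<in> D q" "x + a = \<gamma> + d" "\<gamma>' \<in> \<Gamma>" "d' \<in> D q'" "x + a = \<gamma>' + d'"
          using GXE by metis
        then show False using F2[of q q' \<gamma> \<gamma>' d d'] q by auto
      qed
    qed
  qed
  show "(\<Sum>p<m. emeasure M (D p \<inter> T q)) = emeasure M (D q)" if q: "q < m" for q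
  proof -
    define Dall where "Dall = (\<Union>p\<in>{..<m}. D p)"
    have Dallb: "Dall \<in> sets borel" unfolding Dall_def using bor by auto
    have "(\<Sum>p<m. emeasure M (D p \<inter> T q)) = emeasure M (\<Union>p\<in>{..<m}. D p \<inter> T q)"
    proof (rule sum_emeasure)
      show "(\<lambda>p. D p \<inter> T q) ` {..<m} \<subseteq> sets M" using bor Tb[OF q] sM by auto
      show "finite {..<m}" by simp
      show "disjoint_family_on (\<lambda>p. D p \<inter> T q) {..<m}"
        unfolding disjoint_family_on_def
      proof (intro ballI impI)
        fix p p' assume pp: "p \<in> {..<m}" "p' \<in> {..<m}" "p \<noteq> p'"
        show "D p \<inter> T q \<inter> (D p' \<inter> T q) = {}"
        proof (rule ccontr)
          assume "D p \<inter> T q \<inter> (D p' \<inter> T q) \<noteq> {}"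
          then obtain x where "x \<in> D p" "x \<in> D p'" by blast
          then show False using F2[of p p' 0 0 x x] pp G0 by auto
        qed
      qed
    qed
    also have "(\<Union>p\<in>{..<m}. D p \<inter> T q) = Dall \<inter> T q" unfolding Dall_def by blast
    finally have s1: "(\<Sum>p<m. emeasure M (D p \<inter> T q)) = emeasure M (Dall \<inter> T q)" .
    define A where "A \<gamma> = {x \<in> Dall. x + a \<in> (\<lambda>y. \<gamma> + y) ` D q}" for \<gamma>
    define C where "C \<gamma> = {y \<in> D q. \<gamma> + y - a \<in> Dall}" for \<gamma>
    have Ab: "A \<gamma> \<in> sets borel" for \<gamma>
    proof -
      have "A \<gamma> = Dall \<inter> (\<lambda>x. x + a) -` ((\<lambda>y. \<gamma> + y) ` D q)" unfolding A_def by auto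
      then show ?thesis using Dallb borel_pre_right[OF borel_left[OF bor[OF q]]] by simp
    qed
    have AU: "Dall \<inter> T q = (\<Union>\<gamma>\<in>\<Gamma>. A \<gamma>)" unfolding A_def T_def GX_def by blast
    have Adisj: "disjoint_family_on A \<Gamma>"
      unfolding disjoint_family_on_def
    proof (intro ballI impI)
      fix \<gamma> \<gamma>' assume g: "\<gamma> \<in> \<Gamma>" "\<gamma>' \<in> \<Gamma>" "\<gamma> \<noteq> \<gamma>'"
      show "A \<gamma> \<inter> A \<gamma>' = {}"
      proof (rule ccontr)
        assume "A \<gamma> \<inter> A \<gamma>' \<noteq> {}"
        then obtain x d d' where "d \<in> D q" "x + a = \<gamma> + d" "d' \<in> D q" "x + a = \<gamma>' + d'"
          unfolding A_def by blast
        then show False using F2[of q q \<gamma> \<gamma>' d d'] q g by auto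
      qed
    qed
    have CA: "C \<gamma> = (\<lambda>z. - \<gamma> + z) ` ((\<lambda>x. x + a) ` A \<gamma>)" for \<gamma>
    proof
      show "C \<gamma> \<subseteq> (\<lambda>z. - \<gamma> + z) ` ((\<lambda>x. x + a) ` A \<gamma>)"
      proof
        fix y assume y: "y \<in> C \<gamma>"
        define x where "x = \<gamma> + y - a"
        have "x + a = \<gamma> + y" unfolding x_def by simp
        then have "x \<in> A \<gamma>" using y unfolding A_def C_def x_def by auto
        moreover have "y = - \<gamma> + (x + a)" using \<open>x + a = \<gamma> + y\<close> by simp
        ultimately show "y \<in> (\<lambda>z. - \<gamma> + z) ` ((\<lambda>x. x + a) ` A \<gamma>)" by blast
      qed
      show "(\<lambda>z. - \<gamma> + z) ` ((\<lambda>x. x + a) ` A \<gamma>) \<subseteq> C \<gamma>"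
      proof
        fix y assume "y \<in> (\<lambda>z. - \<gamma> + z) ` ((\<lambda>x. x + a) ` A \<gamma>)"
        then obtain x where x: "x \<in> A \<gamma>" "y = - \<gamma> + (x + a)" by blast
        then obtain d where d: "x \<in> Dall" "d \<in> D q" "x + a = \<gamma> + d" unfolding A_def by blast
        have yd: "y = d" using x(2) d(3) by simp
        have "\<gamma> + y - a = x" using d(3) yd by (metis add_diff_cancel)
        then show "y \<in> C \<gamma>" unfolding C_def using d yd by simp
      qed
    qed
    have CAm: "emeasure M (C \<gamma>) = emeasure M (A \<gamma>)" for \<gamma>
    proof -
      have "emeasure M (C \<gamma>) = emeasure M ((\<lambda>x. x + a) ` A \<gamma>)"
        unfolding CA by (rule invl[OF borel_right[OF Ab]])
      also have "\<dots> = emeasure M (A \<gamma>)" by (rule invr[OF Ab])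
      finally show ?thesis .
    qed
    have Cb: "C \<gamma> \<in> sets borel" for \<gamma> unfolding CA by (intro borel_left borel_right Ab)
    have CU: "D q = (\<Union>\<gamma>\<in>\<Gamma>. C \<gamma>)"
    proof
      show "(\<Union>\<gamma>\<in>\<Gamma>. C \<gamma>) \<subseteq> D q" unfolding C_def by blast
      show "D q \<subseteq> (\<Union>\<gamma>\<in>\<Gamma>. C \<gamma>)"
      proof
        fix y assume y: "y \<in> D q"
        obtain p \<gamma>0 d0 where pd: "p < m" "\<gamma>0 \<in> \<Gamma>" "d0 \<in> D p" "y - a = \<gamma>0 + d0" using F1[of "y - a"] by blast
        have "- \<gamma>0 + y - a = d0"
        proof -
          have "- \<gamma>0 + y - a = - \<gamma>0 + (y - a)" by (simp add: add_diff_eq)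
          also have "\<dots> = d0" using pd(4) by simp
          finally show ?thesis .
        qed
        then have "y \<in> C (- \<gamma>0)" unfolding C_def Dall_def using y pd by auto
        then show "y \<in> (\<Union>\<gamma>\<in>\<Gamma>. C \<gamma>)" using Gmin[OF pd(2)] by blast
      qed
    qed
    have Cdisj: "disjoint_family_on C \<Gamma>"
      unfolding disjoint_family_on_def
    proof (intro ballI impI)
      fix \<gamma> \<gamma>' assume g: "\<gamma> \<in> \<Gamma>" "\<gamma>' \<in> \<Gamma>" "\<gamma> \<noteq> \<gamma>'"
      show "C \<gamma> \<inter> C \<gamma>' = {}"
      proof (rule ccontr)
        assume "C \<gamma> \<inter> C \<gamma>' \<noteq> {}"
        then obtain y p p' where pp: "p < m" "p' < m" "\<gamma> + y - a \<in> D p" "\<gamma>' + y - a \<in> D p'"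
          unfolding C_def Dall_def by blast
        have e1: "\<gamma>' - \<gamma> + (\<gamma> + y) = \<gamma>' + y" by (simp add: add.assoc[symmetric])
        have "(\<gamma>' - \<gamma>) + (\<gamma> + y - a) = (\<gamma>' - \<gamma> + (\<gamma> + y)) - a" by (simp only: add_diff_eq)
        also have "\<dots> = \<gamma>' + y - a" by (simp only: e1)
        finally have "(\<gamma>' - \<gamma>) + (\<gamma> + y - a) = \<gamma>' + y - a" .
        then have "(\<gamma>' - \<gamma>) + (\<gamma> + y - a) = 0 + (\<gamma>' + y - a)" by simp
        then have "\<gamma>' - \<gamma> = 0" using F2[OF pp(1,2) Gdiff[OF g(2,1)] G0 pp(3,4)] by blast
        then show False using g(3) by simp
      qed
    qed
    have "emeasure M (Dall \<inter> T q) = (\<integral>\<^sup>+\<gamma>. emeasure M (A \<gamma>) \<partial>count_space \<Gamma>)"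
      unfolding AU by (rule emeasure_UN_countable) (use Ab sM countG Adisj in auto)
    also have "\<dots> = (\<integral>\<^sup>+\<gamma>. emeasure M (C \<gamma>) \<partial>count_space \<Gamma>)" by (simp add: CAm)
    also have "\<dots> = emeasure M (\<Union>\<gamma>\<in>\<Gamma>. C \<gamma>)"
      by (rule emeasure_UN_countable[symmetric]) (use Cb sM countG Cdisj in auto)
    also have "\<dots> = emeasure M (D q)" using CU by simp
    finally show ?thesis using s1 by simp
  qed
qed

end

definition eq_of :: "'i set \<Rightarrow> 'i set \<Rightarrow> 'i \<Rightarrow> real" where
  "eq_of S1 S2 = (\<lambda>i. (if i \<in> S1 then 1 else 0) - (if i \<in> S2 then 1 else 0))"

lemma eq_of_rat: "eq_of S1 S2 i \<in> \<rat>" unfolding eq_of_def by simp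

lemma sum_eq_of:
  assumes "finite I" "S1 \<subseteq> I" "S2 \<subseteq> I"
  shows "(\<Sum>i\<in>I. eq_of S1 S2 i * x i) = sum x S1 - sum x S2"
proof -
  have r: "(\<Sum>i\<in>I. (if i \<in> S then 1 else 0) * x i) = sum x S" if "S \<subseteq> I" for S
  proof -
    have "(\<Sum>i\<in>I. (if i \<in> S then 1 else 0) * x i) = (\<Sum>i\<in>I. if i \<in> S then x i else 0)"
      by (rule sum.cong) auto
    also have "\<dots> = sum x (I \<inter> S)" using assms(1) by (rule sum.inter_restrict[symmetric])
    also have "I \<inter> S = S" using that by blast
    finally show ?thesis .
  qed
  have "(\<Sum>i\<in>I. eq_of S1 S2 i * x i) = (\<Sum>i\<in>I. (if i \<in> S1 then 1 else 0) * x i - (if i \<in> S2 then 1 else 0) * x i)"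
    unfolding eq_of_def by (rule sum.cong) (simp_all add: left_diff_distrib)
  also have "\<dots> = (\<Sum>i\<in>I. (if i \<in> S1 then 1 else 0) * x i) - (\<Sum>i\<in>I. (if i \<in> S2 then 1 else 0) * x i)"
    by (rule sum_subtractf)
  finally show ?thesis using r[OF assms(2)] r[OF assms(3)] by simp
qed

lemma rat_scale:
  assumes "finite I" "\<forall>i\<in>I. y i \<in> \<rat>"
  shows "\<exists>N::nat. N > 0 \<and> (\<forall>i\<in>I. real N * y i \<in> \<int>)"
  using assms
proof (induction I rule: finite_induct)
  case empty then show ?case by (intro exI[of _ 1]) simp
next
  case (insert j F)
  obtain N where N: "N > 0" "\<forall>i\<in>F. real N * y i \<in> \<int>" using insert by auto
  obtain r where r: "y j = of_rat r" using insert.prems by (auto elim: Rats_cases)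
  obtain a b where ab: "r = Fract a b" "b > 0" by (cases r) auto
  have yj: "y j = real_of_int a / real_of_int b" using r ab by (simp add: of_rat_rat)
  define N' where "N' = N * nat b"
  have "N' > 0" unfolding N'_def using N(1) ab(2) by simp
  moreover have "real N' * y i \<in> \<int>" if "i \<in> insert j F" for i
  proof (cases "i = j")
    case True
    have "real N' * y i = of_int (int N * a)" unfolding N'_def True yj using ab(2) by simp
    then show ?thesis by simp
  next
    case False
    then have i: "i \<in> F" using that by simp
    have "real N' * y i = real (nat b) * (real N * y i)" unfolding N'_def by simp
    moreover have "real (nat b) \<in> \<int>" by simp
    moreover have "real N * y i \<in> \<int>" using N(2) i by blast
    ultimately show ?thesis by (simp only: Ints_mult)
  qed
  ultimately show ?case by blast
qed

context setting begin

lemma open_pos: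
  fixes M :: "'g measure"
  assumes sM: "sets M = sets borel" and nz: "emeasure M UNIV \<noteq> 0"
    and invl: "\<And>g A. A \<in> sets borel \<Longrightarrow> emeasure M ((\<lambda>x. g + x) ` A) = emeasure M A"
    and U: "open U" "u \<in> U"
  shows "emeasure M U > 0"
proof (rule ccontr)
  assume "\<not> emeasure M U > 0"
  then have U0: "emeasure M U = 0" by (simp add: not_gr_zero)
  have Ub: "U \<in> sets borel" using U(1) by simp
  have nullT: "(\<lambda>x. g + x) ` A \<in> null_sets M" if "A \<in> sets borel" "emeasure M A = 0" for g A
  proof (rule null_setsI)
    show "emeasure M ((\<lambda>x. g + x) ` A) = 0" using invl[OF that(1), of g] that(2) by simp
    show "(\<lambda>x. g + x) ` A \<in> sets M" using borel_left[OF that(1), of g] sM by simp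
  qed
  obtain L where L: "compact L" "\<forall>g. \<exists>\<gamma>\<in>\<Gamma>. \<exists>l\<in>L. g = \<gamma> + l" using cover_ex by blast
  have cov: "L \<subseteq> (\<Union>l\<in>L. (\<lambda>x. (l - u) + x) ` U)"
  proof
    fix l assume "l \<in> L"
    moreover have "l = (l - u) + u" by simp
    ultimately show "l \<in> (\<Union>l\<in>L. (\<lambda>x. (l - u) + x) ` U)" using U(2) by blast
  qed
  have op: "open ((\<lambda>x. (l - u) + x) ` U)" if "l \<in> L" for l
    unfolding trans_image by (rule open_vimage[OF U(1) cont_left])
  obtain L0 where L0: "L0 \<subseteq> L" "finite L0" "L \<subseteq> (\<Union>l\<in>L0. (\<lambda>x. (l - u) + x) ` U)"
    by (rule compactE_image[OF L(1) op cov]) blast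
  have "(\<Union>l\<in>L0. (\<lambda>x. (l - u) + x) ` U) \<in> null_sets M"
    by (rule null_sets_UN'[OF countable_finite[OF L0(2)]]) (rule nullT[OF Ub U0])
  moreover have Lb: "L \<in> sets M" using sM borel_closed[OF compact_imp_closed[OF L(1)]] by simp
  ultimately have Ln: "L \<in> null_sets M" using L0(3) by (rule null_sets_subset)
  have eqU: "UNIV = (\<Union>\<gamma>\<in>\<Gamma>. (\<lambda>x. \<gamma> + x) ` L)"
  proof (intro set_eqI iffI)
    fix g :: 'g
    obtain \<gamma> l where "\<gamma> \<in> \<Gamma>" "l \<in> L" "g = \<gamma> + l" using L(2) by blast
    then show "g \<in> (\<Union>\<gamma>\<in>\<Gamma>. (\<lambda>x. \<gamma> + x) ` L)" by blast
  qed simp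
  have Lb': "L \<in> sets borel" using Lb sM by simp
  have L0': "emeasure M L = 0" using Ln by blast
  have "(\<Union>\<gamma>\<in>\<Gamma>. (\<lambda>x. \<gamma> + x) ` L) \<in> null_sets M"
    by (rule null_sets_UN'[OF countG]) (rule nullT[OF Lb' L0'])
  then have "UNIV \<in> null_sets M" by (subst eqU)
  then have "emeasure M UNIV = 0" by (rule null_setsD1)
  then show False using nz by simp
qed

end

context setting begin

lemma model_exists:
  fixes \<phi> :: "'f \<Rightarrow> 'g" and B :: "'f set" and M :: "'g measure"
  assumes B: "finite B" and eta: "\<eta> > 0"
    and sM: "sets M = sets borel" and nz: "emeasure M UNIV \<noteq> 0"
    and cfin: "\<And>K. compact K \<Longrightarrow> emeasure M K < \<infinity>"
    and invl: "\<And>g A. A \<in> sets borel \<Longrightarrow> emeasure M ((\<lambda>x. g + x) ` A) = emeasure M A"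
    and invr: "\<And>g A. A \<in> sets borel \<Longrightarrow> emeasure M ((\<lambda>x. x + g) ` A) = emeasure M A"
  shows "\<exists>(Sl::(nat\<times>nat) set) s0 gpt \<sigma> \<gamma>. finite Sl \<and> s0 \<in> Sl \<and> gpt s0 = 0 \<and>
     (\<forall>b\<in>B. bij (\<sigma> b) \<and> (\<forall>s. s \<in> Sl \<longleftrightarrow> \<sigma> b s \<in> Sl)) \<and> (\<forall>b s. \<gamma> b s \<in> \<Gamma>) \<and>
     (\<forall>b\<in>B. \<forall>s\<in>Sl. dist (gpt s + \<phi> b) (\<gamma> b s + gpt (\<sigma> b s)) < \<eta>)"
proof -
  have eta2: "\<eta>/2 > 0" using eta by simp
  have ex: "\<exists>(m::nat) (D::nat \<Rightarrow> 'g set). m > 0 \<and>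
    (\<forall>g. \<exists>p<m. \<exists>\<gamma>\<in>\<Gamma>. \<exists>d\<in>D p. g = \<gamma> + d) \<and>
    (\<forall>p<m. \<forall>p'<m. \<forall>\<gamma>\<in>\<Gamma>. \<forall>\<gamma>'\<in>\<Gamma>. \<forall>d\<in>D p. \<forall>d'\<in>D p'. \<gamma> + d = \<gamma>' + d' \<longrightarrow> p = p' \<and> \<gamma> = \<gamma>' \<and> d = d') \<and>
    0 \<in> D 0 \<and> open (D 0) \<and>
    (\<forall>p<m. D p \<in> sets borel) \<and>
    (\<forall>p<m. \<exists>c. D p \<subseteq> cball c 1) \<and>
    (\<forall>p<m. \<forall>x\<in>D p. \<forall>y\<in>D p. dist x y < \<eta>/2 \<and> (\<forall>b\<in>B. dist (x + \<phi> b) (y + \<phi> b) < \<eta>/2))"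
    by (rule pieces[OF B eta2])
  then obtain m :: nat and D :: "nat \<Rightarrow> 'g set" where H: "m > 0 \<and>
    (\<forall>g. \<exists>p<m. \<exists>\<gamma>\<in>\<Gamma>. \<exists>d\<in>D p. g = \<gamma> + d) \<and>
    (\<forall>p<m. \<forall>p'<m. \<forall>\<gamma>\<in>\<Gamma>. \<forall>\<gamma>'\<in>\<Gamma>. \<forall>d\<in>D p. \<forall>d'\<in>D p'. \<gamma> + d = \<gamma>' + d' \<longrightarrow> p = p' \<and> \<gamma> = \<gamma>' \<and> d = d') \<and>
    0 \<in> D 0 \<and> open (D 0) \<and>
    (\<forall>p<m. D p \<in> sets borel) \<and>
    (\<forall>p<m. \<exists>c. D p \<subseteq> cball c 1) \<and>
    (\<forall>p<m. \<forall>x\<in>D p. \<forall>y\<in>D p. dist x y < \<eta>/2 \<and> (\<forall>b\<in>B. dist (x + \<phi> b) (y + \<phi> b) < \<eta>/2))"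
    by (elim exE) (rule that)
  note HH = H[THEN conjunct1] H[THEN conjunct2, THEN conjunct1] H[THEN conjunct2, THEN conjunct2, THEN conjunct1]
    H[THEN conjunct2, THEN conjunct2, THEN conjunct2, THEN conjunct1]
    H[THEN conjunct2, THEN conjunct2, THEN conjunct2, THEN conjunct2, THEN conjunct1]
    H[THEN conjunct2, THEN conjunct2, THEN conjunct2, THEN conjunct2, THEN conjunct2, THEN conjunct1]
    H[THEN conjunct2, THEN conjunct2, THEN conjunct2, THEN conjunct2, THEN conjunct2, THEN conjunct2, THEN conjunct1]
    H[THEN conjunct2, THEN conjunct2, THEN conjunct2, THEN conjunct2, THEN conjunct2, THEN conjunct2, THEN conjunct2]
  note m0 = HH(1) and F1 = HH(2) and F2 = HH(3) and z0 = HH(4) and oD0 = HH(5) and bor = HH(6)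
    and cb = HH(7) and small = HH(8)
  have F1': "\<And>g. \<exists>p<m. \<exists>\<gamma>\<in>\<Gamma>. \<exists>d\<in>D p. g = \<gamma> + d" using F1 by blast
  have F2': "\<And>p p' \<gamma> \<gamma>' d d'. p < m \<Longrightarrow> p' < m \<Longrightarrow> \<gamma> \<in> \<Gamma> \<Longrightarrow> \<gamma>' \<in> \<Gamma> \<Longrightarrow> d \<in> D p \<Longrightarrow> d' \<in> D p' \<Longrightarrow>
          \<gamma> + d = \<gamma>' + d' \<Longrightarrow> p = p' \<and> \<gamma> = \<gamma>' \<and> d = d'" using F2 by blast
  have bor': "\<And>p. p < m \<Longrightarrow> D p \<in> sets borel" using bor by blast
  define T where "T b q = {x. x + \<phi> b \<in> GX (D q)}" for b q
  have Tb: "T b q \<in> sets borel" if "q < m" for b q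
  proof -
    have "T b q = (\<lambda>x. x + \<phi> b) -` GX (D q)" unfolding T_def by auto
    then show ?thesis using borel_pre_right[OF borel_GX[OF bor'[OF that]]] by simp
  qed
  have row: "emeasure M (D p) = (\<Sum>q<m. emeasure M (D p \<inter> T b q))" if "p < m" for b p
    unfolding T_def by (rule transport(2)[where M=M and m=m and D=D and a="\<phi> b", OF sM invl invr F1' F2' bor' that])
  have col: "(\<Sum>p<m. emeasure M (D p \<inter> T b q)) = emeasure M (D q)" if "q < m" for b q
    unfolding T_def by (rule transport(3)[where M=M and m=m and D=D and a="\<phi> b", OF sM invl invr F1' F2' bor' that])
  define mu where "mu p = emeasure M (D p)" for p
  define W where "W b p q = emeasure M (D p \<inter> T b q)" for b p q
  have mufin: "mu p < \<infinity>" if pm: "p < m" for p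
  proof -
    obtain c where c: "D p \<subseteq> cball c 1" using cb pm by blast
    have "mu p \<le> emeasure M (cball c 1)" unfolding mu_def
      by (rule emeasure_mono[OF c]) (simp add: sM)
    also have "\<dots> < \<infinity>" using cfin proper by blast
    finally show ?thesis .
  qed
  have Wle: "W b p q \<le> mu p" if "p < m" for b p q
    unfolding W_def mu_def by (rule emeasure_mono) (use bor that sM in auto)
  have Wfin: "W b p q < \<infinity>" if "p < m" for b p q using Wle[OF that] mufin[OF that] by (rule le_less_trans)
  have mu0: "mu 0 > 0" unfolding mu_def by (rule open_pos[OF sM nz invl oD0 z0])
  define x :: "nat + ('f \<times> nat \<times> nat) \<Rightarrow> real" where
    "x = case_sum (\<lambda>p. enn2real (mu p)) (\<lambda>(b,p,q). enn2real (W b p q))"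
  have xl: "x (Inl p) = enn2real (mu p)" for p by (simp add: x_def)
  have xr: "x (Inr (b,p,q)) = enn2real (W b p q)" for b p q by (simp add: x_def)
  define I where "I = Inl ` {..<m} \<union> Inr ` (B \<times> {..<m} \<times> {..<m})"
  have finI: "finite I" unfolding I_def using B by simp
  have xnn: "x i \<ge> 0" for i by (cases i) (auto simp: x_def split: prod.splits)
  define rs :: "'f \<Rightarrow> nat \<Rightarrow> (nat + ('f \<times> nat \<times> nat)) set"
    where "rs b p = (\<lambda>q. Inr (b,p,q)) ` {..<m}" for b p
  define cs :: "'f \<Rightarrow> nat \<Rightarrow> (nat + ('f \<times> nat \<times> nat)) set"
    where "cs b q = (\<lambda>p. Inr (b,p,q)) ` {..<m}" for b q
  have rsI: "rs b p \<subseteq> I" "{Inl p} \<subseteq> I" if "b \<in> B" "p < m" for b p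
    unfolding rs_def I_def using that by auto
  have csI: "cs b q \<subseteq> I" if "b \<in> B" "q < m" for b q
    unfolding cs_def I_def using that by auto
  have rsum: "(\<Sum>i\<in>I. eq_of (rs b p) {Inl p} i * z i) = (\<Sum>q<m. z (Inr (b,p,q))) - z (Inl p)"
    if "b \<in> B" "p < m" for b p and z :: "nat + ('f \<times> nat \<times> nat) \<Rightarrow> real"
  proof -
    have "sum z (rs b p) = (\<Sum>q<m. z (Inr (b,p,q)))"
      unfolding rs_def by (subst sum.reindex) (auto simp: inj_on_def)
    then show ?thesis using sum_eq_of[OF finI rsI[OF that]] by simp
  qed
  have csum: "(\<Sum>i\<in>I. eq_of (cs b q) {Inl q} i * z i) = (\<Sum>p<m. z (Inr (b,p,q))) - z (Inl q)"
    if "b \<in> B" "q < m" for b q and z :: "nat + ('f \<times> nat \<times> nat) \<Rightarrow> real"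
  proof -
    have "sum z (cs b q) = (\<Sum>p<m. z (Inr (b,p,q)))"
      unfolding cs_def by (subst sum.reindex) (auto simp: inj_on_def)
    then show ?thesis using sum_eq_of[OF finI csI[OF that] rsI(2)[OF that]] by simp
  qed
  have zsum: "(\<Sum>j\<in>I. eq_of {i} {} j * z j) = z i" if "i \<in> I" for i and z :: "nat + ('f \<times> nat \<times> nat) \<Rightarrow> real"
    using sum_eq_of[OF finI, of "{i}" "{}" z] that by simp
  define E1 where "E1 = (\<lambda>bp. eq_of (rs (fst bp) (snd bp)) {Inl (snd bp)}) ` (B \<times> {..<m})"
  define E2 where "E2 = (\<lambda>bq. eq_of (cs (fst bq) (snd bq)) {Inl (snd bq)}) ` (B \<times> {..<m})"
  define E3 where "E3 = (\<lambda>i. eq_of {i} {}) ` {i\<in>I. x i = 0}"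
  have finE: "finite (E1 \<union> E2 \<union> E3)" unfolding E1_def E2_def E3_def using B finI by simp
  obtain Es where Es: "set Es = E1 \<union> E2 \<union> E3" using finite_list[OF finE] by blast
  have xrow: "(\<Sum>q<m. x (Inr (b,p,q))) = x (Inl p)" if "b \<in> B" "p < m" for b p
  proof -
    have "x (Inl p) = enn2real (\<Sum>q<m. W b p q)" unfolding xl mu_def W_def using row[OF that(2)] by simp
    also have "\<dots> = (\<Sum>q<m. enn2real (W b p q))"
    proof -
      have "\<And>q. q \<in> {..<m} \<Longrightarrow> W b p q < top" using Wfin that by simp
      then show ?thesis using enn2real_sum[of "{..<m}" "W b p"] by (simp add: o_def)
    qed
    finally show ?thesis by (simp add: xr)
  qed
  have xcol: "(\<Sum>p<m. x (Inr (b,p,q))) = x (Inl q)" if "b \<in> B" "q < m" for b q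
  proof -
    have "x (Inl q) = enn2real (\<Sum>p<m. W b p q)" unfolding xl mu_def W_def using col[OF that(2)] by simp
    also have "\<dots> = (\<Sum>p<m. enn2real (W b p q))"
    proof -
      have "\<And>p. p \<in> {..<m} \<Longrightarrow> W b p q < top" using Wfin by simp
      then show ?thesis using enn2real_sum[of "{..<m}" "\<lambda>p. W b p q"] by (simp add: o_def)
    qed
    finally show ?thesis by (simp add: xr)
  qed
  have Eform: "\<exists>S1 S2. e = eq_of S1 S2" if "e \<in> set Es" for e
    using that unfolding Es E1_def E2_def E3_def by blast
  have Erat: "\<forall>e\<in>set Es. \<forall>i\<in>I. e i \<in> \<rat>"
  proof (intro ballI)
    fix e i assume "e \<in> set Es"
    then obtain S1 S2 where "e = eq_of S1 S2" using Eform by blast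
    then show "e i \<in> \<rat>" by (simp add: eq_of_rat)
  qed
  have Ex: "\<forall>e\<in>set Es. (\<Sum>i\<in>I. e i * x i) = 0"
  proof
    fix e assume "e \<in> set Es"
    then consider (r) b p where "b \<in> B" "p < m" "e = eq_of (rs b p) {Inl p}"
      | (c) b q where "b \<in> B" "q < m" "e = eq_of (cs b q) {Inl q}"
      | (z) i where "i \<in> I" "x i = 0" "e = eq_of {i} {}"
      unfolding Es E1_def E2_def E3_def by (auto simp: mem_Times_iff)
    then show "(\<Sum>i\<in>I. e i * x i) = 0"
    proof cases
      case r then show ?thesis using rsum[OF r(1,2)] xrow[OF r(1,2)] by simp
    next
      case c then show ?thesis using csum[OF c(1,2)] xcol[OF c(1,2)] by simp
    next
      case z then show ?thesis using zsum[OF z(1)] by simp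
    qed
  qed
  define P where "P = {x i | i. i \<in> I \<and> x i > 0}"
  have finP: "finite P" unfolding P_def using finI by simp
  define \<delta> where "\<delta> = Min (insert 1 P)"
  have dpos: "\<delta> > 0" unfolding \<delta>_def using finP by (subst Min_gr_iff) (auto simp: P_def)
  have dle: "\<delta> \<le> x i" if "i \<in> I" "x i > 0" for i
    unfolding \<delta>_def using finP that by (intro Min_le) (auto simp: P_def)
  obtain y where y: "\<forall>i\<in>I. y i \<in> \<rat>" "\<forall>e\<in>set Es. (\<Sum>i\<in>I. e i * y i) = 0" "\<forall>i\<in>I. \<bar>y i - x i\<bar> < \<delta>"
    using rat_approx[OF finI Erat Ex dpos] by blast
  have ypos: "y i > 0 \<longleftrightarrow> x i > 0" "y i \<ge> 0" if i: "i \<in> I" for i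
  proof -
    have "y i > 0 \<and> y i \<ge> 0" if xp: "x i > 0"
      using y(3) i dle[OF i xp] by (auto simp: abs_less_iff)
    moreover have "y i = 0" if xz: "x i = 0"
    proof -
      have "eq_of {i} {} \<in> set Es" unfolding Es E3_def using i xz by blast
      then show ?thesis using y(2) zsum[OF i, of y] by simp
    qed
    ultimately show "y i > 0 \<longleftrightarrow> x i > 0" "y i \<ge> 0" using xnn[of i] by (auto simp: order.order_iff_strict)
  qed
  have yrow: "(\<Sum>q<m. y (Inr (b,p,q))) = y (Inl p)" if "b \<in> B" "p < m" for b p
  proof -
    have "eq_of (rs b p) {Inl p} \<in> set Es" unfolding Es E1_def using that
      by (intro UnI1 image_eqI[where x="(b,p)"]) auto
    then show ?thesis using y(2) rsum[OF that, of y] by simp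
  qed
  have ycol: "(\<Sum>p<m. y (Inr (b,p,q))) = y (Inl q)" if "b \<in> B" "q < m" for b q
  proof -
    have "eq_of (cs b q) {Inl q} \<in> set Es" unfolding Es E2_def using that
      by (intro UnI1 UnI2 image_eqI[where x="(b,q)"]) auto
    then show ?thesis using y(2) csum[OF that, of y] by simp
  qed
  obtain N :: nat where N: "N > 0" "\<forall>i\<in>I. real N * y i \<in> \<int>" using rat_scale[OF finI y(1)] by blast
  define z where "z i = nat \<lfloor>real N * y i\<rfloor>" for i
  have zr: "real (z i) = real N * y i" if iI: "i \<in> I" for i
  proof -
    have "real N * y i \<in> \<int>" using N(2) iI by blast
    then obtain k where k: "real N * y i = of_int k" by (auto elim: Ints_cases)
    have "real N * y i \<ge> 0" using ypos(2)[OF iI] by simp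
    then have "k \<ge> 0" using k by simp
    then show ?thesis unfolding z_def k by simp
  qed
  define n where "n p = z (Inl p)" for p
  define Z where "Z b p q = z (Inr (b,p,q))" for b p q
  have InlI: "Inl p \<in> I" if "p < m" for p using that unfolding I_def by auto
  have InrI: "Inr (b,p,q) \<in> I" if "b \<in> B" "p < m" "q < m" for b p q using that unfolding I_def by auto
  have Zrow: "(\<Sum>q<m. Z b p q) = n p" if "b \<in> B" "p < m" for b p
  proof -
    have "real (\<Sum>q<m. Z b p q) = (\<Sum>q<m. real N * y (Inr (b,p,q)))"
      unfolding of_nat_sum Z_def by (rule sum.cong) (use zr InrI that in auto)
    also have "\<dots> = real N * y (Inl p)" unfolding sum_distrib_left[symmetric] yrow[OF that] ..
    also have "\<dots> = real (n p)" unfolding n_def using zr[OF InlI[OF that(2)]] by simp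
    finally show ?thesis by (simp only: of_nat_eq_iff)
  qed
  have Zcol: "(\<Sum>p<m. Z b p q) = n q" if "b \<in> B" "q < m" for b q
  proof -
    have "real (\<Sum>p<m. Z b p q) = (\<Sum>p<m. real N * y (Inr (b,p,q)))"
      unfolding of_nat_sum Z_def by (rule sum.cong) (use zr InrI that in auto)
    also have "\<dots> = real N * y (Inl q)" unfolding sum_distrib_left[symmetric] ycol[OF that] ..
    also have "\<dots> = real (n q)" unfolding n_def using zr[OF InlI[OF that(2)]] by simp
    finally show ?thesis by (simp only: of_nat_eq_iff)
  qed
  define Sl where "Sl = {(p,t). p < m \<and> t < n p}"
  have "\<forall>b\<in>B. \<exists>\<sigma>. bij \<sigma> \<and> (\<forall>s. s \<in> Sl \<longleftrightarrow> \<sigma> s \<in> Sl) \<and> (\<forall>s\<in>Sl. Z b (fst s) (fst (\<sigma> s)) > 0)"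
  proof
    fix b assume b: "b \<in> B"
    show "\<exists>\<sigma>. bij \<sigma> \<and> (\<forall>s. s \<in> Sl \<longleftrightarrow> \<sigma> s \<in> Sl) \<and> (\<forall>s\<in>Sl. Z b (fst s) (fst (\<sigma> s)) > 0)"
      unfolding Sl_def by (rule slot_perm) (use Zrow Zcol b in auto)
  qed
  then obtain \<sigma> where \<sigma>: "\<forall>b\<in>B. bij (\<sigma> b) \<and> (\<forall>s. s \<in> Sl \<longleftrightarrow> \<sigma> b s \<in> Sl) \<and> (\<forall>s\<in>Sl. Z b (fst s) (fst (\<sigma> b s)) > 0)"
    by (rule bchoice[THEN exE]) blast
  have n0: "n 0 > 0"
  proof -
    have "x (Inl 0) > 0" unfolding xl using mu0 mufin[OF m0] by (simp add: enn2real_positive_iff)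
    then have "y (Inl 0) > 0" using ypos(1)[OF InlI[OF m0]] by simp
    then have "real (n 0) > 0" unfolding n_def using zr[OF InlI[OF m0]] N(1) by simp
    then show ?thesis by simp
  qed
  have s0: "(0,0) \<in> Sl" unfolding Sl_def using m0 n0 by simp
  have finSl: "finite Sl"
  proof -
    have "Sl \<subseteq> {..<m} \<times> {..<Max (n ` {..<m}) + 1}"
    proof
      fix s assume "s \<in> Sl"
      then obtain p t where s: "s = (p,t)" "p < m" "t < n p" unfolding Sl_def by blast
      have nle: "n p \<le> Max (n ` {..<m})" using s(2) by (intro Max_ge) auto
      have "t < Max (n ` {..<m}) + 1" using s(3) nle by linarith
      then show "s \<in> {..<m} \<times> {..<Max (n ` {..<m}) + 1}" using s(1,2) by simp
    qed
    then show ?thesis by (rule finite_subset) simp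
  qed
  have Wpos: "\<exists>w. w \<in> D p \<inter> T b q" if "b \<in> B" "p < m" "q < m" "Z b p q > 0" for b p q
  proof -
    have "real (Z b p q) > 0" using that(4) by simp
    then have "y (Inr (b,p,q)) > 0" unfolding Z_def using zr[OF InrI[OF that(1-3)]] N(1)
      by (simp add: zero_less_mult_iff)
    then have "x (Inr (b,p,q)) > 0" using ypos(1)[OF InrI[OF that(1-3)]] by simp
    then have "W b p q \<noteq> 0" unfolding xr by auto
    then have "D p \<inter> T b q \<noteq> {}" unfolding W_def by (metis emeasure_empty)
    then show ?thesis by blast
  qed
  define gp where "gp p = (if p = 0 then 0 else (SOME w. w \<in> D p))" for p
  have gpD: "gp p \<in> D p" if "\<exists>w. w \<in> D p" for p
    unfolding gp_def using z0 someI_ex[OF that] by auto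
  define gpt where "gpt s = gp (fst s)" for s :: "nat \<times> nat"
  define good where "good b s g \<longleftrightarrow> g \<in> \<Gamma> \<and> (\<exists>w\<in>D (fst s). \<exists>d\<in>D (fst (\<sigma> b s)). w + \<phi> b = g + d)" for b s g
  define \<gamma> where "\<gamma> b s = (if \<exists>g. good b s g then SOME g. good b s g else 0)" for b s
  have \<gamma>G: "\<gamma> b s \<in> \<Gamma>" for b s
  proof (cases "\<exists>g. good b s g")
    case True
    have gG: "g \<in> \<Gamma>" if "good b s g" for g using that unfolding good_def by blast
    have "\<gamma> b s = (SOME g. good b s g)" unfolding \<gamma>_def using True by simp
    then show ?thesis using gG[OF someI_ex[OF True]] by simp
  next
    case False
    then have "\<gamma> b s = 0" unfolding \<gamma>_def by (simp only: if_False)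
    then show ?thesis using G0 by simp
  qed
  have bound: "dist (gpt s + \<phi> b) (\<gamma> b s + gpt (\<sigma> b s)) < \<eta>" if b: "b \<in> B" and s: "s \<in> Sl" for b s
  proof -
    define p q where "p = fst s" and "q = fst (\<sigma> b s)"
    have p: "p < m" using s unfolding Sl_def p_def by auto
    have "\<sigma> b s \<in> Sl" using \<sigma> b s by blast
    then have q: "q < m" unfolding Sl_def q_def by (cases "\<sigma> b s") auto
    have Zp: "Z b p q > 0" using \<sigma> b s unfolding p_def q_def by blast
    obtain w where w: "w \<in> D p" "w + \<phi> b \<in> GX (D q)" using Wpos[OF b p q Zp] unfolding T_def by blast
    obtain g0 d0 where "g0 \<in> \<Gamma>" "d0 \<in> D q" "w + \<phi> b = g0 + d0" using w(2) unfolding GX_def by blast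
    then have ex: "\<exists>g. good b s g" unfolding good_def p_def[symmetric] q_def[symmetric] using w(1) by blast
    then have "good b s (\<gamma> b s)" unfolding \<gamma>_def using someI_ex[OF ex] by simp
    then obtain w' d where wd: "w' \<in> D p" "d \<in> D q" "w' + \<phi> b = \<gamma> b s + d"
      unfolding good_def p_def q_def by blast
    have gpp: "gp p \<in> D p" using gpD wd(1) by blast
    have gpq: "gp q \<in> D q" using gpD wd(2) by blast
    have "dist (gp p + \<phi> b) (\<gamma> b s + gp q) \<le> dist (gp p + \<phi> b) (w' + \<phi> b) + dist (w' + \<phi> b) (\<gamma> b s + gp q)"
      by (rule dist_triangle)
    also have "dist (w' + \<phi> b) (\<gamma> b s + gp q) = dist d (gp q)" unfolding wd(3) by (rule dl)
    also have "dist (gp p + \<phi> b) (w' + \<phi> b) + dist d (gp q) < \<eta>/2 + \<eta>/2"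
    proof (rule add_strict_mono)
      show "dist (gp p + \<phi> b) (w' + \<phi> b) < \<eta>/2" using small p gpp wd(1) b by blast
      show "dist d (gp q) < \<eta>/2" using small q gpq wd(2) by blast
    qed
    finally show ?thesis unfolding gpt_def p_def q_def by simp
  qed
  have g00: "gpt (0,0) = 0" unfolding gpt_def gp_def by simp
  have S1: "\<forall>b\<in>B. bij (\<sigma> b) \<and> (\<forall>s. s \<in> Sl \<longleftrightarrow> \<sigma> b s \<in> Sl)"
  proof
    fix b assume bB: "b \<in> B"
    from \<sigma> bB have "bij (\<sigma> b) \<and> (\<forall>s. s \<in> Sl \<longleftrightarrow> \<sigma> b s \<in> Sl) \<and> (\<forall>s\<in>Sl. Z b (fst s) (fst (\<sigma> b s)) > 0)"
      by (rule bspec)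
    then show "bij (\<sigma> b) \<and> (\<forall>s. s \<in> Sl \<longleftrightarrow> \<sigma> b s \<in> Sl)" by blast
  qed
  have S2: "\<forall>b s. \<gamma> b s \<in> \<Gamma>" using \<gamma>G by blast
  have S3: "\<forall>b\<in>B. \<forall>s\<in>Sl. dist (gpt s + \<phi> b) (\<gamma> b s + gpt (\<sigma> b s)) < \<eta>" using bound by blast
  show ?thesis
    by (rule exI[where x=Sl], rule exI[where x="(0,0)"], rule exI[where x=gpt], rule exI[where x=\<sigma>],
        rule exI[where x=\<gamma>]) (intro conjI finSl s0 g00 S1 S2 S3)
qed

end

theorem theorem1:
  fixes \<Gamma> :: "'g::{group_add, metric_space} set"
    and S :: "'f::group_add set"
    and \<phi> :: "'f \<Rightarrow> 'g"
  assumes add_cont: "continuous_on UNIV (\<lambda>p::'g \<times> 'g. fst p + snd p)"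
    and minus_cont: "continuous_on UNIV (uminus :: 'g \<Rightarrow> 'g)"
    and loc_compact: "\<forall>x::'g. \<exists>U. open U \<and> x \<in> U \<and> compact (closure U)"
    and unimod: "unimodular TYPE('g)"
    and left_inv: "\<forall>g x y::'g. dist (g + x) (g + y) = dist x y"
    and proper: "\<forall>(x::'g) r. compact (cball x r)"
    and subgrp: "is_subgroup \<Gamma>"
    and discrete: "\<forall>\<gamma>\<in>\<Gamma>. \<exists>e>0. \<forall>\<gamma>'\<in>\<Gamma>. dist \<gamma> \<gamma>' < e \<longrightarrow> \<gamma>' = \<gamma>"
    and cocompact: "\<exists>K. compact K \<and> (\<forall>g. \<exists>k\<in>K. \<exists>\<gamma>\<in>\<Gamma>. g = k + \<gamma>)"
    and S: "symmetric_free_generating_set S"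
    and hom: "is_hom \<phi>"
  shows "\<forall>\<epsilon>>0. \<exists>\<psi>. perturbation \<epsilon> S \<phi> \<psi> \<and> virtually_hom_into \<psi> \<Gamma>"
proof (intro allI impI)
  fix \<epsilon> :: real assume eps: "\<epsilon> > 0"
  interpret setting \<Gamma>
    by (unfold_locales) (rule add_cont minus_cont left_inv proper subgrp discrete cocompact)+
  obtain B where B: "finite B" "free_basis B" "S = B \<union> uminus ` B"
    using S unfolding symmetric_free_generating_set_def by blast
  obtain M :: "'g measure" where M: "sets M = sets borel" "emeasure M UNIV \<noteq> 0"
      "\<forall>K. compact K \<longrightarrow> emeasure M K < \<infinity>"
      "\<forall>g A. A \<in> sets borel \<longrightarrow> emeasure M ((\<lambda>x. g + x) ` A) = emeasure M A \<and> emeasure M ((\<lambda>x. x + g) ` A) = emeasure M A"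
    using unimod unfolding unimodular_def by blast
  have invl: "\<And>g A. A \<in> sets borel \<Longrightarrow> emeasure M ((\<lambda>x. g + x) ` A) = emeasure M A" using M(4) by blast
  have invr: "\<And>g A. A \<in> sets borel \<Longrightarrow> emeasure M ((\<lambda>x. x + g) ` A) = emeasure M A" using M(4) by blast
  have cfin: "\<And>K. compact K \<Longrightarrow> emeasure M K < \<infinity>" using M(3) by blast
  have "\<forall>b\<in>B. \<exists>d>0. \<forall>u. dist u (\<phi> b) < d \<longrightarrow> dist (- u) (- \<phi> b) < \<epsilon>"
    using contD[OF minus_cont eps] by blast
  then obtain d where d: "d > 0" "\<forall>b\<in>B. \<forall>u. dist u (\<phi> b) < d \<longrightarrow> dist (- u) (- \<phi> b) < \<epsilon>"
    using finite_pos_min[OF B(1), of "\<lambda>b d. \<forall>u. dist u (\<phi> b) < d \<longrightarrow> dist (- u) (- \<phi> b) < \<epsilon>"]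
    by fastforce
  define \<eta> where "\<eta> = min d \<epsilon>"
  have eta: "\<eta> > 0" "\<eta> \<le> \<epsilon>" "\<eta> \<le> d" unfolding \<eta>_def using d(1) eps by auto
  have "\<exists>(Sl::(nat\<times>nat) set) s0 gpt \<sigma> \<gamma>. finite Sl \<and> s0 \<in> Sl \<and> gpt s0 = 0 \<and>
     (\<forall>b\<in>B. bij (\<sigma> b) \<and> (\<forall>s. s \<in> Sl \<longleftrightarrow> \<sigma> b s \<in> Sl)) \<and> (\<forall>b s. \<gamma> b s \<in> \<Gamma>) \<and>
     (\<forall>b\<in>B. \<forall>s\<in>Sl. dist (gpt s + \<phi> b) (\<gamma> b s + gpt (\<sigma> b s)) < \<eta>)"
    by (rule model_exists[OF B(1) eta(1) M(1) M(2) cfin invl invr])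
  then obtain Sl :: "(nat\<times>nat) set" and s0 gpt \<sigma> \<gamma> where
    X: "finite Sl \<and> s0 \<in> Sl \<and> gpt s0 = 0 \<and>
     (\<forall>b\<in>B. bij (\<sigma> b) \<and> (\<forall>s. s \<in> Sl \<longleftrightarrow> \<sigma> b s \<in> Sl)) \<and> (\<forall>b s. \<gamma> b s \<in> \<Gamma>) \<and>
     (\<forall>b\<in>B. \<forall>s\<in>Sl. dist (gpt s + \<phi> b) (\<gamma> b s + gpt (\<sigma> b s)) < \<eta>)"
    by (elim exE) (rule that)
  have fin: "finite Sl" and s0: "s0 \<in> Sl" and g0: "gpt s0 = 0" using X by blast+
  have sig: "\<And>b. b \<in> B \<Longrightarrow> bij (\<sigma> b) \<and> (\<forall>s. s \<in> Sl \<longleftrightarrow> \<sigma> b s \<in> Sl)" using X by blast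
  have gam: "\<And>b s. \<gamma> b s \<in> \<Gamma>" using X by blast
  have bd: "\<And>b s. b \<in> B \<Longrightarrow> s \<in> Sl \<Longrightarrow> dist (gpt s + \<phi> b) (\<gamma> b s + gpt (\<sigma> b s)) < \<eta>"
    using X by blast
  have e1: "dist (\<gamma> b s + gpt (\<sigma> b s)) (gpt s + \<phi> b) \<le> \<epsilon>" if "b \<in> B" "s \<in> Sl" for b s
    using bd[OF that] eta(2) by (simp add: dist_commute)
  have e2: "dist (- \<gamma> b s + gpt s) (gpt (\<sigma> b s) + - \<phi> b) \<le> \<epsilon>" if b: "b \<in> B" and s: "s \<in> Sl" for b s
  proof -
    define a g1 g2 c where "a = \<phi> b" and "g1 = gpt s" and "g2 = gpt (\<sigma> b s)" and "c = \<gamma> b s"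
    define w where "w = - g1 + (c + g2)"
    have h: "dist (g1 + a) (c + g2) < \<eta>" using bd[OF b s] unfolding a_def g1_def g2_def c_def .
    have "g1 + w = c + g2" unfolding w_def by simp
    then have "dist w a = dist (g1 + a) (c + g2)" using dl[of g1 a w] by (simp add: dist_commute)
    then have "dist w a < d" using h eta(3) by simp
    then have dw: "dist (- w) (- a) < \<epsilon>" using d(2) b unfolding a_def by blast
    have mw: "- w = - g2 + (- c + g1)" unfolding w_def by (simp only: minus_add minus_minus add.assoc)
    have "dist (- c + g1) (g2 + - a) = dist (- g2 + (- c + g1)) (- g2 + (g2 + - a))" by (rule dl[symmetric])
    also have "\<dots> = dist (- w) (- a)" unfolding mw by (simp only: minus_add_cancel)
    finally have "dist (- c + g1) (g2 + - a) < \<epsilon>" using dw by simp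
    then show ?thesis unfolding a_def g1_def g2_def c_def by simp
  qed
  have "\<exists>\<psi>. perturbation \<epsilon> (B \<union> uminus ` B) \<phi> \<psi> \<and> virtually_hom_into \<psi> \<Gamma>"
    by (rule model_thm[OF subgrp B(2) hom left_inv fin s0 g0 sig gam e1 e2])
  then show "\<exists>\<psi>. perturbation \<epsilon> S \<phi> \<psi> \<and> virtually_hom_into \<psi> \<Gamma>" using B(3) by simp
qed

end
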